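(* Let $X=T(\mathcal{F}_0,(\theta_n,\mathcal{F}_n)_{n=1}^\infty)$ be a mixed Tsirelson space where $(\mathcal{F}_n)_{n\ge0}$ are regular families with $\mathcal{S}_0\subseteq\mathcal{F}_n$ for all $n\ge0$, $\mathcal{F}=\bigcup_{n\ge0}\mathcal{F}_n$ is regular, and $(\theta_n)_{n\ge1}$ is a nonincreasing null sequence in $(0,1)$. Let $\varepsilon>0$ and let $\mathcal{G}$ be a regular family. Assume there exists $m_0\in\mathbb{N}$ such that for all $m\ge m_0$ there exist $n_1,\dots,n_s\in\mathbb{N}$ with $\theta_m<\varepsilon\theta_{n_1}\cdots\theta_{n_s}$ and $\mathcal{F}_m\subseteq[\mathcal{G},\mathcal{F}_{n_1},\dots,\mathcal{F}_{n_s}]$. Then there is a constant $K=K(\varepsilon,m_0)<\infty$ such that for any normalized block basic sequence $(x_k)_{k=1}^p$ (of the unit vector basis) in $X$ and any real numbers $(a_k)_{k=1}^p$, $$\Big\|\sum_{k=1}^pa_kx_k\Big\|\le K\Big\|\sum_{k=1}^pa_ke_{i_k}\Big\|+2\varepsilon\rho_1\Big(\sum_{k=1}^pa_ke_{i_k}\Big)+2\rho_2\Big(\sum_{k=1}^pa_ke_{i_k}\Big)+2\varepsilon\sum_{k=1}^p|a_k|,$$ where $i_k=\max\operatorname{supp}x_k$, and $\rho_1,\rho_2$ are the norms of $T(\mathcal{F},(\theta_n,\mathcal{F}_n)_{n=1}^\infty)$ and $T(\mathcal{G},(\theta_n,\mathcal{F}_n)_{n=1}^\infty)$ respectively.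
   Context: For finite $E,F\subseteq\mathbb{N}$, $E<F$ means $\max E<\min F$. A family of finite subsets of $\mathbb{N}$ is regular if it is hereditary, spreading (if $\{n_1<\dots<n_k\}$ is in it and $m_i\ge n_i$, $m_1<\dots<m_k$, then $\{m_1,\dots,m_k\}$ is in it), and compact in $2^{\mathbb{N}}$. $\mathcal{S}_0=\{\{n\}:n\in\mathbb{N}\}\cup\{\emptyset\}$. For $x=\sum a_ke_k\in c_{00}$ and finite $E$, $Ex=\sum_{k\in E}a_ke_k$; $\|x\|_{\mathcal{H}}=\sup_{F\in\mathcal{H}}\sum_{k\in F}|a_k|$. $E_1<\dots<E_k$ is $\mathcal{M}$-admissible if $\{\min E_i\}_{i=1}^k\in\mathcal{M}$. $\mathcal{M}[\mathcal{N}]=\{\bigcup_{i=1}^kF_i:F_i\in\mathcal{N},\ (F_i)\ \mathcal{M}\text{-admissible}\}$; inductively $[\mathcal{M}_1,\mathcal{M}_2]=\mathcal{M}_1[\mathcal{M}_2]$, $[\mathcal{M}_1,\dots,\mathcal{M}_{i+1}]=[\mathcal{M}_1,\dots,\mathcal{M}_i][\mathcal{M}_{i+1}]$. For a regular family $\mathcal{H}$ (playing the role of the first family), $T(\mathcal{H},(\theta_n,\mathcal{F}_n)_{n=1}^\infty)$ is the completion of $c_{00}$ under the norm implicitly defined by $\|x\|=\max\{\|x\|_{\mathcal{H}},\sup_n\sup\theta_n\sum_{i=1}^k\|E_ix\|\}$, the inner supremum over $\mathcal{F}_n$-admissible sequences $(E_i)_{i=1}^k$. *)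

theory Defs
  imports Complex_Main
begin

text \<open>Vectors of c00 are functions nat => real (finitely supported where relevant).
  Families are sets of finite subsets of nat.\<close>

definition supp :: "(nat \<Rightarrow> real) \<Rightarrow> nat set" where
  "supp x = {i. x i \<noteq> 0}"

definition unitvec :: "nat \<Rightarrow> nat \<Rightarrow> real" where
  "unitvec i = (\<lambda>j. if j = i then 1 else 0)"

definition restr :: "nat set \<Rightarrow> (nat \<Rightarrow> real) \<Rightarrow> nat \<Rightarrow> real" where
  "restr E x = (\<lambda>k. if k \<in> E then x k else 0)"

definition hereditary :: "nat set set \<Rightarrow> bool" where
  "hereditary M \<longleftrightarrow> (\<forall>F\<in>M. \<forall>G. G \<subseteq> F \<longrightarrow> G \<in> M)"

definition spreading :: "nat set set \<Rightarrow> bool" where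
  "spreading M \<longleftrightarrow> (\<forall>F\<in>M. \<forall>G. finite G \<and> card G = card F \<and>
      (\<forall>i<card F. sorted_list_of_set F ! i \<le> sorted_list_of_set G ! i) \<longrightarrow> G \<in> M)"

text \<open>Compactness in 2^N (product topology) = closedness: a set all of whose initial
  segments are initial segments of members belongs to the family.\<close>
definition compact_family :: "nat set set \<Rightarrow> bool" where
  "compact_family M \<longleftrightarrow> (\<forall>A::nat set. (\<forall>n. \<exists>F\<in>M. F \<inter> {..<n} = A \<inter> {..<n}) \<longrightarrow> A \<in> M)"

definition regular :: "nat set set \<Rightarrow> bool" where
  "regular M \<longleftrightarrow> (\<forall>F\<in>M. finite F) \<and> hereditary M \<and> spreading M \<and> compact_family M"

definition S0 :: "nat set set" where
  "S0 = {{n} | n. True} \<union> {{}}"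

definition admissible :: "nat set set \<Rightarrow> nat set list \<Rightarrow> bool" where
  "admissible M Es \<longleftrightarrow> (\<forall>E\<in>set Es. finite E \<and> E \<noteq> {}) \<and>
     (\<forall>i. Suc i < length Es \<longrightarrow> Max (Es ! i) < Min (Es ! Suc i)) \<and>
     Min ` set Es \<in> M"

definition fam_comp :: "nat set set \<Rightarrow> nat set set \<Rightarrow> nat set set" where
  "fam_comp M N = {\<Union>(set Fl) | Fl. admissible M Fl \<and> (\<forall>F\<in>set Fl. F \<in> N)}"

definition fam_bracket :: "nat set set \<Rightarrow> nat set set list \<Rightarrow> nat set set" where
  "fam_bracket M1 Ms = foldl fam_comp M1 Ms"

definition hnorm :: "nat set set \<Rightarrow> (nat \<Rightarrow> real) \<Rightarrow> real" where
  "hnorm H x = (SUP F\<in>H. \<Sum>k\<in>F. \<bar>x k\<bar>)"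

definition tstep :: "nat set set \<Rightarrow> (nat \<Rightarrow> real) \<Rightarrow> (nat \<Rightarrow> nat set set)
    \<Rightarrow> ((nat \<Rightarrow> real) \<Rightarrow> real) \<Rightarrow> (nat \<Rightarrow> real) \<Rightarrow> real" where
  "tstep H \<theta> Fs f x = max (hnorm H x)
     (SUP n\<in>{1..}. SUP Es\<in>{Es. admissible (Fs n) Es}. \<theta> n * (\<Sum>E\<leftarrow>Es. f (restr E x)))"

primrec titer :: "nat set set \<Rightarrow> (nat \<Rightarrow> real) \<Rightarrow> (nat \<Rightarrow> nat set set)
    \<Rightarrow> nat \<Rightarrow> (nat \<Rightarrow> real) \<Rightarrow> real" where
  "titer H \<theta> Fs 0 = hnorm H"
| "titer H \<theta> Fs (Suc j) = tstep H \<theta> Fs (titer H \<theta> Fs j)"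

text \<open>Norm of T(H,(theta_n,F_n)_{n>=1}) on c00: the standard construction as the
  supremum of the increasing iterates (the solution of the implicit equation).\<close>
definition tnorm :: "nat set set \<Rightarrow> (nat \<Rightarrow> real) \<Rightarrow> (nat \<Rightarrow> nat set set)
    \<Rightarrow> (nat \<Rightarrow> real) \<Rightarrow> real" where
  "tnorm H \<theta> Fs x = (SUP j. titer H \<theta> Fs j x)"

end

theory Submission
  imports Defs
begin

definition l1 :: "(nat \<Rightarrow> real) \<Rightarrow> real" where
  "l1 x = (\<Sum>q\<in>supp x. \<bar>x q\<bar>)"

lemma restr_apply: "restr E x q = (if q \<in> E then x q else 0)"
  by (simp add: restr_def)

lemma supp_restr: "supp (restr E x) = E \<inter> supp x"
  by (auto simp: supp_def restr_def)

lemma restr_restr: "restr E (restr F x) = restr (E \<inter> F) x"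
  by (auto simp: restr_def)

lemma restr_empty: "restr {} x = (\<lambda>_. 0)"
  by (auto simp: restr_def)

lemma finite_supp_restr: "finite (supp x) \<Longrightarrow> finite (supp (restr E x))"
  by (simp add: supp_restr)

lemma l1_zero: "l1 (\<lambda>_. 0) = 0"
  by (simp add: l1_def supp_def)

lemma l1_nonneg: "0 \<le> l1 x"
  by (simp add: l1_def sum_nonneg)

lemma sum_abs_le_l1:
  assumes "finite (supp x)"
  shows "(\<Sum>k\<in>F. \<bar>x k\<bar>) \<le> l1 x"
proof (cases "finite F")
  case True
  have "(\<Sum>k\<in>F. \<bar>x k\<bar>) = (\<Sum>k\<in>F \<inter> supp x. \<bar>x k\<bar>)"
    by (rule sum.mono_neutral_right) (auto simp: supp_def True)
  also have "\<dots> \<le> l1 x" unfolding l1_def by (rule sum_mono2) (auto simp: assms)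
  finally show ?thesis .
qed (simp add: l1_nonneg)

lemma l1_restr_sum:
  assumes "finite (supp x)"
  shows "l1 (restr E x) = (\<Sum>q\<in>supp x. if q \<in> E then \<bar>x q\<bar> else 0)"
proof -
  have "l1 (restr E x) = (\<Sum>q\<in>E \<inter> supp x. \<bar>x q\<bar>)"
    unfolding l1_def supp_restr by (rule sum.cong) (auto simp: restr_def)
  also have "\<dots> = (\<Sum>q\<in>supp x. if q \<in> E then \<bar>x q\<bar> else 0)"
    using assms by (simp add: sum.If_cases Int_commute)
  finally show ?thesis .
qed

lemma min_le_max_fin: "finite A \<Longrightarrow> A \<noteq> {} \<Longrightarrow> Min A \<le> Max A"
  by (meson Max_ge Min_le ex_in_conv order.trans)

lemma adm_lt:
  assumes "admissible M Es" "i < i'" "i' < length Es"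
  shows "Max (Es!i) < Min (Es!i')"
  using assms(2,3)
proof (induction i')
  case 0 then show ?case by simp
next
  case (Suc i')
  have lt: "Max (Es!i') < Min (Es!Suc i')" using assms(1) Suc.prems unfolding admissible_def by auto
  show ?case
  proof (cases "i = i'")
    case True thus ?thesis using lt by simp
  next
    case False
    hence "Max (Es!i) < Min (Es!i')" using Suc by auto
    moreover have "Min (Es!i') \<le> Max (Es!i')"
      using assms(1) Suc.prems nth_mem[of i' Es] unfolding admissible_def
      by (intro min_le_max_fin) auto
    ultimately show ?thesis using lt by linarith
  qed
qed

lemma adm_fin: "admissible M Es \<Longrightarrow> i < length Es \<Longrightarrow> finite (Es!i) \<and> Es!i \<noteq> {}"
  unfolding admissible_def by (auto dest: nth_mem)

lemma adm_disj:
  assumes "admissible M Es" "i < length Es" "i' < length Es" "q \<in> Es!i" "q \<in> Es!i'"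
  shows "i = i'"
proof (rule ccontr)
  assume "i \<noteq> i'"
  then consider "i < i'" | "i' < i" by linarith
  then show False
  proof cases
    case 1
    have "q \<le> Max (Es!i)" using adm_fin[OF assms(1,2)] assms(4) by simp
    moreover have "Min (Es!i') \<le> q" using adm_fin[OF assms(1,3)] assms(5) by simp
    ultimately show False using adm_lt[OF assms(1) 1 assms(3)] by linarith
  next
    case 2
    have "q \<le> Max (Es!i')" using adm_fin[OF assms(1,3)] assms(5) by simp
    moreover have "Min (Es!i) \<le> q" using adm_fin[OF assms(1,2)] assms(4) by simp
    ultimately show False using adm_lt[OF assms(1) 2 assms(2)] by linarith
  qed
qed

lemma sum_list_nth: "(\<Sum>E\<leftarrow>Es. f E) = (\<Sum>i<length Es. f (Es!i))"
  by (simp add: sum_list_sum_nth atLeast0LessThan)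

lemma adm_l1:
  assumes "admissible M Es" "finite (supp x)"
  shows "(\<Sum>E\<leftarrow>Es. l1 (restr E x)) \<le> l1 x"
proof -
  have "(\<Sum>E\<leftarrow>Es. l1 (restr E x)) = (\<Sum>i<length Es. \<Sum>q\<in>supp x. if q \<in> Es!i then \<bar>x q\<bar> else 0)"
    by (simp add: sum_list_nth l1_restr_sum[OF assms(2)])
  also have "\<dots> = (\<Sum>q\<in>supp x. \<Sum>i<length Es. if q \<in> Es!i then \<bar>x q\<bar> else 0)"
    by (rule sum.swap)
  also have "\<dots> \<le> (\<Sum>q\<in>supp x. \<bar>x q\<bar>)"
  proof (rule sum_mono)
    fix q
    have "(\<Sum>i<length Es. if q \<in> Es!i then \<bar>x q\<bar> else 0) = (\<Sum>i\<in>{i. i<length Es \<and> q \<in> Es!i}. \<bar>x q\<bar>)"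
      by (simp add: sum.If_cases Int_def conj_commute)
    also have "\<dots> = of_nat (card {i. i<length Es \<and> q \<in> Es!i}) * \<bar>x q\<bar>" by simp
    also have "\<dots> \<le> 1 * \<bar>x q\<bar>"
    proof (rule mult_right_mono)
      have "card {i. i<length Es \<and> q \<in> Es!i} \<le> Suc 0"
        using adm_disj[OF assms(1)] by (subst card_le_Suc0_iff_eq) auto
      thus "real (card {i. i < length Es \<and> q \<in> Es ! i}) \<le> 1" by simp
    qed simp
    finally show "(\<Sum>i<length Es. if q \<in> Es!i then \<bar>x q\<bar> else 0) \<le> \<bar>x q\<bar>" by simp
  qed
  finally show ?thesis by (simp add: l1_def)
qed


lemma inj_of_smono:
  fixes g :: "'a::linorder \<Rightarrow> 'b::linorder"
  assumes "\<forall>i\<in>I. \<forall>i'\<in>I. i < i' \<longrightarrow> g i < g i'"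
  shows "inj_on g I"
proof (rule inj_onI)
  fix x y assume "x \<in> I" "y \<in> I" "g x = g y"
  thus "x = y" using assms by (metis linorder_neqE order_less_irrefl)
qed

lemma sl_img:
  assumes "finite I" "\<forall>i\<in>I. \<forall>i'\<in>I. i < i' \<longrightarrow> g i < g i'"
  shows "sorted_list_of_set (g ` I) = map g (sorted_list_of_set I)"
proof -
  have inj: "inj_on g I" by (rule inj_of_smono[OF assms(2)])
  have "sorted_wrt (<) (map g (sorted_list_of_set I))"
    unfolding sorted_wrt_map
    using sorted_wrt_mono_rel[of "sorted_list_of_set I" "(<)" "\<lambda>u v. g u < g v"]
      assms strict_sorted_list_of_set[of I] by (auto simp: set_sorted_list_of_set)
  moreover have "set (map g (sorted_list_of_set I)) = g ` I" using assms by simp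
  moreover have "length (map g (sorted_list_of_set I)) = card (g ` I)"
    using card_image[OF inj] by simp
  ultimately show ?thesis
    using sorted_list_of_set_unique[of "g ` I" "map g (sorted_list_of_set I)"] assms by auto
qed

lemma spread_img:
  fixes I :: "'a::linorder set"
  assumes her: "hereditary F" and spr: "spreading F" and X: "X \<in> F" and fin: "finite I"
    and hm: "\<forall>i\<in>I. \<forall>i'\<in>I. i < i' \<longrightarrow> h i < h i'" and hX: "h ` I \<subseteq> X"
    and gm: "\<forall>i\<in>I. \<forall>i'\<in>I. i < i' \<longrightarrow> g i < g i'" and hg: "\<forall>i\<in>I. h i \<le> g i"
  shows "g ` I \<in> F"
proof -
  have hI: "h ` I \<in> F" using her X hX unfolding hereditary_def by blast
  have injh: "inj_on h I" by (rule inj_of_smono[OF hm])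
  have injg: "inj_on g I" by (rule inj_of_smono[OF gm])
  have c: "card (g ` I) = card (h ` I)" using card_image[OF injh] card_image[OF injg] by simp
  have "\<forall>i<card (h ` I). sorted_list_of_set (h ` I) ! i \<le> sorted_list_of_set (g ` I) ! i"
  proof (intro allI impI)
    fix i assume "i < card (h ` I)"
    hence i: "i < length (sorted_list_of_set I)" using card_image[OF injh] fin by simp
    hence "sorted_list_of_set I ! i \<in> I" using fin nth_mem set_sorted_list_of_set by blast
    thus "sorted_list_of_set (h ` I) ! i \<le> sorted_list_of_set (g ` I) ! i"
      using sl_img[OF fin hm] sl_img[OF fin gm] i hg by simp
  qed
  thus ?thesis using spr hI c fin unfolding spreading_def by blast
qed

lemma fam_admissible:
  assumes fin: "\<forall>i<m. finite (R i)"
    and succ: "\<forall>i i'. i < i' \<longrightarrow> i' < m \<longrightarrow> R i \<noteq> {} \<longrightarrow> R i' \<noteq> {} \<longrightarrow> Max (R i) < Min (R i')"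
    and mins: "{Min (R i) | i. i < m \<and> R i \<noteq> {}} \<in> M"
  shows "admissible M (map R (filter (\<lambda>i. R i \<noteq> {}) [0..<m]))"
proof -
  define xs where "xs = filter (\<lambda>i. R i \<noteq> {}) [0..<m]"
  have sx: "sorted_wrt (<) xs" unfolding xs_def by (simp add: sorted_wrt_filter)
  have setx: "set xs = {i. i < m \<and> R i \<noteq> {}}" unfolding xs_def by auto
  have 1: "\<forall>E\<in>set (map R xs). finite E \<and> E \<noteq> {}" using setx fin by auto
  have 2: "\<forall>i. Suc i < length (map R xs) \<longrightarrow> Max (map R xs ! i) < Min (map R xs ! Suc i)"
  proof (intro allI impI)
    fix i assume a: "Suc i < length (map R xs)"
    have lt: "xs!i < xs!Suc i" using sorted_wrt_nth_less[OF sx, of i "Suc i"] a by simp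
    have "xs!i \<in> set xs" "xs!Suc i \<in> set xs" using a by auto
    thus "Max (map R xs ! i) < Min (map R xs ! Suc i)" using a lt succ setx by auto
  qed
  have 3: "Min ` set (map R xs) = {Min (R i) | i. i < m \<and> R i \<noteq> {}}" using setx by auto
  show ?thesis unfolding admissible_def using 1 2 3 mins xs_def by auto
qed

lemma fam_sum:
  assumes "\<And>i. i < m \<Longrightarrow> R i = {} \<Longrightarrow> f (R i) = 0"
  shows "(\<Sum>E\<leftarrow>map R (filter (\<lambda>i. R i \<noteq> {}) [0..<m]). f E) = (\<Sum>i<m. f (R i))"
proof -
  have "(\<Sum>E\<leftarrow>map R (filter (\<lambda>i. R i \<noteq> {}) [0..<m]). f E)
      = (\<Sum>i\<leftarrow>filter (\<lambda>i. R i \<noteq> {}) [0..<m]. f (R i))" by (simp add: comp_def)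
  also have "\<dots> = (\<Sum>i\<leftarrow>[0..<m]. f (R i))"
    by (rule sum_list_map_filter) (use assms in auto)
  also have "\<dots> = (\<Sum>i<m. f (R i))"
    by (simp add: sum_list_distinct_conv_sum_set atLeast0LessThan)
  finally show ?thesis .
qed


lemma finite_supp_sum:
  assumes "finite B" "\<forall>k\<in>B. finite (supp (u k))"
  shows "finite (supp (\<lambda>q. \<Sum>k\<in>B. c k * u k q))"
proof -
  have "supp (\<lambda>q. \<Sum>k\<in>B. c k * u k q) \<subseteq> (\<Union>k\<in>B. supp (u k))"
  proof
    fix q assume "q \<in> supp (\<lambda>q. \<Sum>k\<in>B. c k * u k q)"
    hence "(\<Sum>k\<in>B. c k * u k q) \<noteq> 0" by (simp add: supp_def)
    then obtain k where "k \<in> B" "c k * u k q \<noteq> 0" by (meson sum.neutral)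
    thus "q \<in> (\<Union>k\<in>B. supp (u k))" by (auto simp: supp_def)
  qed
  thus ?thesis using assms by (meson finite_UN_I finite_subset)
qed

lemma finite_supp_add: "finite (supp x) \<Longrightarrow> finite (supp y) \<Longrightarrow> finite (supp (\<lambda>q. x q + y q))"
  by (rule finite_subset[of _ "supp x \<union> supp y"]) (auto simp: supp_def)

lemma finite_supp_smul: "finite (supp x) \<Longrightarrow> finite (supp (\<lambda>q. c * x q))"
  by (rule finite_subset[of _ "supp x"]) (auto simp: supp_def)

locale mt =
  fixes Fs :: "nat \<Rightarrow> nat set set" and \<theta> :: "nat \<Rightarrow> real"
  assumes th_pos: "\<And>n. n \<ge> 1 \<Longrightarrow> 0 < \<theta> n \<and> \<theta> n < 1"
    and emp: "\<And>n. {} \<in> Fs n"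
begin

lemma adm_nil: "admissible (Fs n) []" by (simp add: admissible_def emp)

lemma term_bd:
  assumes P: "\<And>E. 0 \<le> f (restr E x) \<and> f (restr E x) \<le> l1 (restr E x)"
    and fx: "finite (supp x)" and n: "n \<ge> 1" and adm: "admissible (Fs n) Es"
  shows "0 \<le> \<theta> n * (\<Sum>E\<leftarrow>Es. f (restr E x)) \<and> \<theta> n * (\<Sum>E\<leftarrow>Es. f (restr E x)) \<le> l1 x"
proof -
  have s0: "0 \<le> (\<Sum>E\<leftarrow>Es. f (restr E x))" using P by (intro sum_list_nonneg) auto
  have "(\<Sum>E\<leftarrow>Es. f (restr E x)) \<le> (\<Sum>E\<leftarrow>Es. l1 (restr E x))"
    using P by (simp add: sum_list_mono)
  also have "\<dots> \<le> l1 x" by (rule adm_l1[OF adm fx])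
  finally have s1: "(\<Sum>E\<leftarrow>Es. f (restr E x)) \<le> l1 x" .
  have t: "0 < \<theta> n" "\<theta> n < 1" using th_pos[OF n] by auto
  have "\<theta> n * (\<Sum>E\<leftarrow>Es. f (restr E x)) \<le> 1 * (\<Sum>E\<leftarrow>Es. f (restr E x))"
    using t s0 by (intro mult_right_mono) auto
  thus ?thesis using s0 s1 t by simp
qed

lemma inner_bdd:
  assumes P: "\<And>E. 0 \<le> f (restr E x) \<and> f (restr E x) \<le> l1 (restr E x)"
    and fx: "finite (supp x)" and n: "n \<ge> 1"
  shows "bdd_above ((\<lambda>Es. \<theta> n * (\<Sum>E\<leftarrow>Es. f (restr E x))) ` {Es. admissible (Fs n) Es})"
  using term_bd[OF P fx n] by (intro bdd_aboveI[of _ "l1 x"]) auto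

lemma inner_bd:
  assumes P: "\<And>E. 0 \<le> f (restr E x) \<and> f (restr E x) \<le> l1 (restr E x)"
    and fx: "finite (supp x)" and n: "n \<ge> 1"
  shows "0 \<le> (SUP Es\<in>{Es. admissible (Fs n) Es}. \<theta> n * (\<Sum>E\<leftarrow>Es. f (restr E x)))
      \<and> (SUP Es\<in>{Es. admissible (Fs n) Es}. \<theta> n * (\<Sum>E\<leftarrow>Es. f (restr E x))) \<le> l1 x"
proof
  show "0 \<le> (SUP Es\<in>{Es. admissible (Fs n) Es}. \<theta> n * (\<Sum>E\<leftarrow>Es. f (restr E x)))"
    by (rule cSUP_upper2[OF inner_bdd[OF P fx n], of "[]"]) (auto simp: adm_nil)
  show "(SUP Es\<in>{Es. admissible (Fs n) Es}. \<theta> n * (\<Sum>E\<leftarrow>Es. f (restr E x))) \<le> l1 x"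
    by (rule cSUP_least) (use adm_nil term_bd[OF P fx n] in auto)
qed

lemma outer_bdd:
  assumes P: "\<And>E. 0 \<le> f (restr E x) \<and> f (restr E x) \<le> l1 (restr E x)"
    and fx: "finite (supp x)"
  shows "bdd_above ((\<lambda>n. SUP Es\<in>{Es. admissible (Fs n) Es}. \<theta> n * (\<Sum>E\<leftarrow>Es. f (restr E x))) ` {1..})"
  using inner_bd[OF P fx] by (intro bdd_aboveI[of _ "l1 x"]) auto

lemma ts_upper:
  assumes P: "\<And>E. 0 \<le> f (restr E x) \<and> f (restr E x) \<le> l1 (restr E x)"
    and fx: "finite (supp x)" and n: "n \<ge> 1" and adm: "admissible (Fs n) Es"
  shows "\<theta> n * (\<Sum>E\<leftarrow>Es. f (restr E x)) \<le> tstep H \<theta> Fs f x"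
proof -
  have "\<theta> n * (\<Sum>E\<leftarrow>Es. f (restr E x)) \<le> (SUP Es\<in>{Es. admissible (Fs n) Es}. \<theta> n * (\<Sum>E\<leftarrow>Es. f (restr E x)))"
    by (rule cSUP_upper[OF _ inner_bdd[OF P fx n]]) (use adm in simp)
  also have "\<dots> \<le> (SUP n\<in>{1..}. SUP Es\<in>{Es. admissible (Fs n) Es}. \<theta> n * (\<Sum>E\<leftarrow>Es. f (restr E x)))"
    by (rule cSUP_upper[OF _ outer_bdd[OF P fx]]) (use n in simp)
  finally show ?thesis unfolding tstep_def by simp
qed

lemma ts_hn: "hnorm H x \<le> tstep H \<theta> Fs f x"
  unfolding tstep_def by simp

lemma ts_least:
  assumes "hnorm H x \<le> B"
    and "\<And>n Es. n \<ge> 1 \<Longrightarrow> admissible (Fs n) Es \<Longrightarrow> \<theta> n * (\<Sum>E\<leftarrow>Es. f (restr E x)) \<le> B"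
  shows "tstep H \<theta> Fs f x \<le> B"
proof -
  have "(SUP n\<in>{1..}. SUP Es\<in>{Es. admissible (Fs n) Es}. \<theta> n * (\<Sum>E\<leftarrow>Es. f (restr E x))) \<le> B"
  proof (rule cSUP_least)
    show "{1::nat..} \<noteq> {}" by auto
    fix n :: nat assume "n \<in> {1..}"
    thus "(SUP Es\<in>{Es. admissible (Fs n) Es}. \<theta> n * (\<Sum>E\<leftarrow>Es. f (restr E x))) \<le> B"
      by (intro cSUP_least) (use adm_nil assms(2) in auto)
  qed
  thus ?thesis unfolding tstep_def using assms(1) by simp
qed

end

locale mtH = mt +
  fixes H :: "nat set set"
  assumes Hne: "H \<noteq> {}"
begin

abbreviation ti where "ti j \<equiv> titer H \<theta> Fs j"
abbreviation tn where "tn \<equiv> tnorm H \<theta> Fs"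

lemma hn_bdd: "finite (supp x) \<Longrightarrow> bdd_above ((\<lambda>F. \<Sum>k\<in>F. \<bar>x k\<bar>) ` H)"
  using sum_abs_le_l1 by (intro bdd_aboveI[of _ "l1 x"]) auto

lemma hn_ge: "finite (supp x) \<Longrightarrow> F \<in> H \<Longrightarrow> (\<Sum>k\<in>F. \<bar>x k\<bar>) \<le> hnorm H x"
  unfolding hnorm_def by (rule cSUP_upper[OF _ hn_bdd]) auto

lemma hn_le: "finite (supp x) \<Longrightarrow> hnorm H x \<le> l1 x"
  unfolding hnorm_def by (rule cSUP_least) (use Hne sum_abs_le_l1 in auto)

lemma hn_nonneg: "finite (supp x) \<Longrightarrow> 0 \<le> hnorm H x"
proof -
  assume f: "finite (supp x)"
  obtain F where "F \<in> H" using Hne by auto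
  thus ?thesis using hn_ge[OF f, of F] by (meson order_trans sum_nonneg abs_ge_zero)
qed

lemma ti_bd: "finite (supp x) \<Longrightarrow> 0 \<le> ti j x \<and> ti j x \<le> l1 x"
proof (induction j arbitrary: x)
  case 0
  thus ?case using hn_le hn_nonneg by simp
next
  case (Suc j)
  have P: "\<And>E. 0 \<le> ti j (restr E x) \<and> ti j (restr E x) \<le> l1 (restr E x)"
    using Suc.IH finite_supp_restr Suc.prems by blast
  have "tstep H \<theta> Fs (ti j) x \<le> l1 x"
    by (rule ts_least) (use hn_le[OF Suc.prems] term_bd[OF P Suc.prems] in auto)
  moreover have "0 \<le> tstep H \<theta> Fs (ti j) x"
    using ts_hn hn_nonneg[OF Suc.prems] order_trans by blast
  ultimately show ?case by simp
qed

lemma P_ti: "finite (supp x) \<Longrightarrow> 0 \<le> ti j (restr E x) \<and> ti j (restr E x) \<le> l1 (restr E x)"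
  using ti_bd finite_supp_restr by blast

lemma ti_zero: "ti j (\<lambda>_. 0) = 0"
  using ti_bd[of "\<lambda>_. 0" j] by (simp add: l1_zero supp_def)

lemma hn_restr: "finite (supp x) \<Longrightarrow> hnorm H (restr E x) \<le> hnorm H x"
  unfolding hnorm_def[of H "restr E x"]
proof (rule cSUP_least)
  show "H \<noteq> {}" by (rule Hne)
  fix F assume f: "finite (supp x)" "F \<in> H"
  have "(\<Sum>k\<in>F. \<bar>restr E x k\<bar>) \<le> (\<Sum>k\<in>F. \<bar>x k\<bar>)"
    by (rule sum_mono) (simp add: restr_def)
  also have "\<dots> \<le> hnorm H x" by (rule hn_ge[OF f])
  finally show "(\<Sum>k\<in>F. \<bar>restr E x k\<bar>) \<le> hnorm H x" .
qed

lemma ti_restr: "finite (supp x) \<Longrightarrow> ti j (restr E x) \<le> ti j x"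
proof (induction j arbitrary: x E)
  case 0
  thus ?case using hn_restr by simp
next
  case (Suc j)
  show ?case unfolding titer.simps
  proof (rule ts_least)
    show "hnorm H (restr E x) \<le> tstep H \<theta> Fs (ti j) x"
      using hn_restr[OF Suc.prems] ts_hn order_trans by blast
    fix n Es assume n: "1 \<le> n" and adm: "admissible (Fs n) Es"
    have "(\<Sum>E'\<leftarrow>Es. ti j (restr E' (restr E x))) \<le> (\<Sum>E'\<leftarrow>Es. ti j (restr E' x))"
    proof (rule sum_list_mono)
      fix E' 
      have "restr E' (restr E x) = restr E (restr E' x)" by (auto simp: restr_def)
      thus "ti j (restr E' (restr E x)) \<le> ti j (restr E' x)"
        using Suc.IH[of "restr E' x" E] finite_supp_restr[OF Suc.prems] by simp
    qed
    hence "\<theta> n * (\<Sum>E'\<leftarrow>Es. ti j (restr E' (restr E x))) \<le> \<theta> n * (\<Sum>E'\<leftarrow>Es. ti j (restr E' x))"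
      using th_pos[OF n] by (intro mult_left_mono) auto
    also have "\<dots> \<le> tstep H \<theta> Fs (ti j) x"
      by (rule ts_upper[OF P_ti[OF Suc.prems] Suc.prems n adm])
    finally show "\<theta> n * (\<Sum>E'\<leftarrow>Es. ti j (restr E' (restr E x))) \<le> tstep H \<theta> Fs (ti j) x" .
  qed
qed

lemma ti_mono: "finite (supp x) \<Longrightarrow> ti j x \<le> ti (Suc j) x"
proof (induction j arbitrary: x)
  case 0
  thus ?case using ts_hn by simp
next
  case (Suc j)
  show ?case unfolding titer.simps(2)[of H \<theta> Fs "Suc j"]
    unfolding titer.simps(2)[of H \<theta> Fs j]
  proof (rule ts_least)
    show "hnorm H x \<le> tstep H \<theta> Fs (tstep H \<theta> Fs (ti j)) x" by (rule ts_hn)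
    fix n Es assume n: "1 \<le> n" and adm: "admissible (Fs n) Es"
    have "(\<Sum>E\<leftarrow>Es. ti j (restr E x)) \<le> (\<Sum>E\<leftarrow>Es. ti (Suc j) (restr E x))"
      by (rule sum_list_mono) (use Suc.IH finite_supp_restr[OF Suc.prems] in blast)
    hence "\<theta> n * (\<Sum>E\<leftarrow>Es. ti j (restr E x)) \<le> \<theta> n * (\<Sum>E\<leftarrow>Es. ti (Suc j) (restr E x))"
      using th_pos[OF n] by (intro mult_left_mono) auto
    also have "\<dots> \<le> tstep H \<theta> Fs (ti (Suc j)) x"
      by (rule ts_upper[OF P_ti[OF Suc.prems] Suc.prems n adm])
    finally show "\<theta> n * (\<Sum>E\<leftarrow>Es. ti j (restr E x)) \<le> tstep H \<theta> Fs (tstep H \<theta> Fs (ti j)) x" by simp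
  qed
qed


lemma hn_add: "finite (supp x) \<Longrightarrow> finite (supp y) \<Longrightarrow> hnorm H (\<lambda>q. x q + y q) \<le> hnorm H x + hnorm H y"
  unfolding hnorm_def[of H "\<lambda>q. x q + y q"]
proof (rule cSUP_least)
  show "H \<noteq> {}" by (rule Hne)
  fix F assume f: "finite (supp x)" "finite (supp y)" "F \<in> H"
  have "(\<Sum>k\<in>F. \<bar>x k + y k\<bar>) \<le> (\<Sum>k\<in>F. \<bar>x k\<bar>) + (\<Sum>k\<in>F. \<bar>y k\<bar>)"
    by (simp add: sum.distrib[symmetric] sum_mono abs_triangle_ineq)
  also have "\<dots> \<le> hnorm H x + hnorm H y" using hn_ge f by (meson add_mono)
  finally show "(\<Sum>k\<in>F. \<bar>x k + y k\<bar>) \<le> hnorm H x + hnorm H y" .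
qed

lemma ti_add: "finite (supp x) \<Longrightarrow> finite (supp y) \<Longrightarrow> ti j (\<lambda>q. x q + y q) \<le> ti j x + ti j y"
proof (induction j arbitrary: x y)
  case 0
  thus ?case using hn_add by simp
next
  case (Suc j)
  show ?case unfolding titer.simps
  proof (rule ts_least)
    show "hnorm H (\<lambda>q. x q + y q) \<le> tstep H \<theta> Fs (ti j) x + tstep H \<theta> Fs (ti j) y"
      using hn_add[OF Suc.prems] ts_hn by (meson add_mono order_trans)
    fix n Es assume n: "1 \<le> n" and adm: "admissible (Fs n) Es"
    have "(\<Sum>E\<leftarrow>Es. ti j (restr E (\<lambda>q. x q + y q))) \<le> (\<Sum>E\<leftarrow>Es. ti j (restr E x) + ti j (restr E y))"
    proof (rule sum_list_mono)
      fix E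
      have "restr E (\<lambda>q. x q + y q) = (\<lambda>q. restr E x q + restr E y q)" by (auto simp: restr_def)
      thus "ti j (restr E (\<lambda>q. x q + y q)) \<le> ti j (restr E x) + ti j (restr E y)"
        using Suc.IH finite_supp_restr Suc.prems by simp
    qed
    also have "\<dots> = (\<Sum>E\<leftarrow>Es. ti j (restr E x)) + (\<Sum>E\<leftarrow>Es. ti j (restr E y))"
      by (simp add: sum_list_addf)
    finally have "\<theta> n * (\<Sum>E\<leftarrow>Es. ti j (restr E (\<lambda>q. x q + y q))) \<le>
        \<theta> n * (\<Sum>E\<leftarrow>Es. ti j (restr E x)) + \<theta> n * (\<Sum>E\<leftarrow>Es. ti j (restr E y))"
      using th_pos[OF n] by (simp add: distrib_left[symmetric])
    also have "\<dots> \<le> tstep H \<theta> Fs (ti j) x + tstep H \<theta> Fs (ti j) y"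
      using ts_upper[OF P_ti[OF Suc.prems(1)] Suc.prems(1) n adm] ts_upper[OF P_ti[OF Suc.prems(2)] Suc.prems(2) n adm]
      by (meson add_mono)
    finally show "\<theta> n * (\<Sum>E\<leftarrow>Es. ti j (restr E (\<lambda>q. x q + y q))) \<le> tstep H \<theta> Fs (ti j) x + tstep H \<theta> Fs (ti j) y" .
  qed
qed

lemma hn_smul: "finite (supp x) \<Longrightarrow> hnorm H (\<lambda>q. c * x q) \<le> \<bar>c\<bar> * hnorm H x"
  unfolding hnorm_def[of H "\<lambda>q. c * x q"]
proof (rule cSUP_least)
  show "H \<noteq> {}" by (rule Hne)
  fix F assume f: "finite (supp x)" "F \<in> H"
  have "(\<Sum>k\<in>F. \<bar>c * x k\<bar>) = \<bar>c\<bar> * (\<Sum>k\<in>F. \<bar>x k\<bar>)"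
    by (simp add: abs_mult sum_distrib_left)
  also have "\<dots> \<le> \<bar>c\<bar> * hnorm H x" using hn_ge f by (intro mult_left_mono) auto
  finally show "(\<Sum>k\<in>F. \<bar>c * x k\<bar>) \<le> \<bar>c\<bar> * hnorm H x" .
qed

lemma ti_smul: "finite (supp x) \<Longrightarrow> ti j (\<lambda>q. c * x q) \<le> \<bar>c\<bar> * ti j x"
proof (induction j arbitrary: x)
  case 0
  thus ?case using hn_smul by simp
next
  case (Suc j)
  show ?case unfolding titer.simps
  proof (rule ts_least)
    show "hnorm H (\<lambda>q. c * x q) \<le> \<bar>c\<bar> * tstep H \<theta> Fs (ti j) x"
      using hn_smul[OF Suc.prems] ts_hn[where x=x and f="ti j" and H=H] by (meson abs_ge_zero mult_left_mono order_trans)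
    fix n Es assume n: "1 \<le> n" and adm: "admissible (Fs n) Es"
    have "(\<Sum>E\<leftarrow>Es. ti j (restr E (\<lambda>q. c * x q))) \<le> (\<Sum>E\<leftarrow>Es. \<bar>c\<bar> * ti j (restr E x))"
    proof (rule sum_list_mono)
      fix E
      have "restr E (\<lambda>q. c * x q) = (\<lambda>q. c * restr E x q)" by (auto simp: restr_def)
      thus "ti j (restr E (\<lambda>q. c * x q)) \<le> \<bar>c\<bar> * ti j (restr E x)"
        using Suc.IH finite_supp_restr Suc.prems by simp
    qed
    also have "\<dots> = \<bar>c\<bar> * (\<Sum>E\<leftarrow>Es. ti j (restr E x))"
      by (simp add: sum_list_const_mult)
    finally have "\<theta> n * (\<Sum>E\<leftarrow>Es. ti j (restr E (\<lambda>q. c * x q))) \<le> \<bar>c\<bar> * (\<theta> n * (\<Sum>E\<leftarrow>Es. ti j (restr E x)))"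
      using th_pos[OF n] by (simp add: mult.left_commute)
    also have "\<dots> \<le> \<bar>c\<bar> * tstep H \<theta> Fs (ti j) x"
      using ts_upper[OF P_ti[OF Suc.prems(1)] Suc.prems(1) n adm] by (intro mult_left_mono) auto
    finally show "\<theta> n * (\<Sum>E\<leftarrow>Es. ti j (restr E (\<lambda>q. c * x q))) \<le> \<bar>c\<bar> * tstep H \<theta> Fs (ti j) x" .
  qed
qed

lemma ti_sum:
  assumes "finite B" "\<forall>k\<in>B. finite (supp (u k))"
  shows "ti j (\<lambda>q. \<Sum>k\<in>B. c k * u k q) \<le> (\<Sum>k\<in>B. \<bar>c k\<bar> * ti j (u k))"
  using assms
proof (induction B rule: finite_induct)
  case empty
  thus ?case using ti_zero by simp
next
  case (insert k B)
  have f1: "finite (supp (\<lambda>q. c k * u k q))" using insert finite_supp_smul by auto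
  have f2: "finite (supp (\<lambda>q. \<Sum>k\<in>B. c k * u k q))" using insert finite_supp_sum by auto
  have "(\<lambda>q. \<Sum>k\<in>insert k B. c k * u k q) = (\<lambda>q. c k * u k q + (\<Sum>k\<in>B. c k * u k q))"
    using insert by simp
  hence "ti j (\<lambda>q. \<Sum>k\<in>insert k B. c k * u k q) \<le> ti j (\<lambda>q. c k * u k q) + ti j (\<lambda>q. \<Sum>k\<in>B. c k * u k q)"
    using ti_add[OF f1 f2] by simp
  also have "\<dots> \<le> \<bar>c k\<bar> * ti j (u k) + (\<Sum>k\<in>B. \<bar>c k\<bar> * ti j (u k))"
    using ti_smul insert by (meson add_mono insertCI)
  finally show ?case using insert by simp
qed

lemma ti_adm: "n \<ge> 1 \<Longrightarrow> admissible (Fs n) Es \<Longrightarrow> finite (supp x) \<Longrightarrow>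
    \<theta> n * (\<Sum>E\<leftarrow>Es. ti j (restr E x)) \<le> ti (Suc j) x"
  using ts_upper[OF P_ti] by simp

lemma ti_fam:
  fixes m :: nat
  assumes n: "n \<ge> 1" and fx: "finite (supp x)"
    and fin: "\<forall>i<m. finite (R i)"
    and succ: "\<forall>i i'. i < i' \<longrightarrow> i' < m \<longrightarrow> R i \<noteq> {} \<longrightarrow> R i' \<noteq> {} \<longrightarrow> Max (R i) < Min (R i')"
    and mins: "{Min (R i) | i. i < m \<and> R i \<noteq> {}} \<in> Fs n"
  shows "\<theta> n * (\<Sum>i<m. ti j (restr (R i) x)) \<le> ti (Suc j) x"
proof -
  have "(\<Sum>E\<leftarrow>map R (filter (\<lambda>i. R i \<noteq> {}) [0..<m]). ti j (restr E x)) = (\<Sum>i<m. ti j (restr (R i) x))"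
    by (rule fam_sum) (simp add: restr_empty ti_zero)
  thus ?thesis using ti_adm[OF n fam_admissible[OF fin succ mins] fx, where j=j] by (simp only: titer.simps)
qed

lemma tn_bdd: "finite (supp x) \<Longrightarrow> bdd_above (range (\<lambda>j. ti j x))"
  using ti_bd by (intro bdd_aboveI[of _ "l1 x"]) auto

lemma tn_ge: "finite (supp x) \<Longrightarrow> ti j x \<le> tn x"
  unfolding tnorm_def by (rule cSUP_upper[OF _ tn_bdd]) auto

lemma tn_le: "finite (supp x) \<Longrightarrow> tn x \<le> l1 x"
  unfolding tnorm_def by (rule cSUP_least) (use ti_bd in auto)

lemma tn_nonneg: "finite (supp x) \<Longrightarrow> 0 \<le> tn x"
  using tn_ge[of x 0] ti_bd[of x 0] by linarith

lemma tn_hn: "finite (supp x) \<Longrightarrow> hnorm H x \<le> tn x"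
  using tn_ge[of x 0] by simp

lemma tn_lim: "finite (supp x) \<Longrightarrow> (\<lambda>j. ti j x) \<longlonglongrightarrow> tn x"
  unfolding tnorm_def by (rule LIMSEQ_incseq_SUP[OF tn_bdd]) (auto intro: incseq_SucI ti_mono)

lemma tn_restr: assumes fx: "finite (supp x)" shows "tn (restr E x) \<le> tn x"
  unfolding tnorm_def[of H \<theta> Fs "restr E x"]
proof (rule cSUP_least)
  fix j
  show "ti j (restr E x) \<le> tn x" using ti_restr[OF fx, of j E] tn_ge[OF fx, of j] by linarith
qed auto

lemma tn_zero: "tn (\<lambda>_. 0) = 0"
  using tn_le[of "\<lambda>_. 0"] tn_nonneg[of "\<lambda>_. 0"] by (simp add: l1_zero supp_def)

lemma tn_fam:
  fixes m :: nat
  assumes n: "n \<ge> 1" and fx: "finite (supp x)"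
    and fin: "\<forall>i<m. finite (R i)"
    and succ: "\<forall>i i'. i < i' \<longrightarrow> i' < m \<longrightarrow> R i \<noteq> {} \<longrightarrow> R i' \<noteq> {} \<longrightarrow> Max (R i) < Min (R i')"
    and mins: "{Min (R i) | i. i < m \<and> R i \<noteq> {}} \<in> Fs n"
  shows "\<theta> n * (\<Sum>i<m. tn (restr (R i) x)) \<le> tn x"
proof -
  have "(\<lambda>j. \<theta> n * (\<Sum>i<m. ti j (restr (R i) x))) \<longlonglongrightarrow> \<theta> n * (\<Sum>i<m. tn (restr (R i) x))"
    by (intro tendsto_mult_left tendsto_sum tn_lim finite_supp_restr fx)
  moreover have "\<forall>j\<ge>0. \<theta> n * (\<Sum>i<m. ti j (restr (R i) x)) \<le> tn x"
    using ti_fam[OF n fx fin succ mins] tn_ge[OF fx] order_trans by blast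
  ultimately show ?thesis by (intro LIMSEQ_le_const2) auto
qed

lemma tn_adm:
  assumes n: "n \<ge> 1" and adm: "admissible (Fs n) Es" and fx: "finite (supp x)"
  shows "\<theta> n * (\<Sum>i<length Es. tn (restr (Es!i) x)) \<le> tn x"
proof (rule tn_fam[OF n fx])
  show "\<forall>i<length Es. finite (Es ! i)" using adm_fin[OF adm] by auto
  show "\<forall>i i'. i < i' \<longrightarrow> i' < length Es \<longrightarrow> Es ! i \<noteq> {} \<longrightarrow> Es ! i' \<noteq> {} \<longrightarrow> Max (Es ! i) < Min (Es ! i')"
    using adm_lt[OF adm] by auto
  have "{Min (Es ! i) |i. i < length Es \<and> Es ! i \<noteq> {}} = Min ` set Es"
  proof
    show "{Min (Es ! i) |i. i < length Es \<and> Es ! i \<noteq> {}} \<subseteq> Min ` set Es" by auto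
    show "Min ` set Es \<subseteq> {Min (Es ! i) |i. i < length Es \<and> Es ! i \<noteq> {}}"
    proof
      fix v assume "v \<in> Min ` set Es"
      then obtain i where "i < length Es" "v = Min (Es!i)" by (auto simp: in_set_conv_nth)
      thus "v \<in> {Min (Es ! i) |i. i < length Es \<and> Es ! i \<noteq> {}}" using adm_fin[OF adm] by blast
    qed
  qed
  thus "{Min (Es ! i) |i. i < length Es \<and> Es ! i \<noteq> {}} \<in> Fs n"
    using adm unfolding admissible_def by simp
qed


lemma adm_min_lt:
  assumes "admissible M Es" "i < i'" "i' < length Es"
  shows "Min (Es!i) < Min (Es!i')"
  using adm_lt[OF assms] min_le_max_fin adm_fin[OF assms(1)] assms by (meson order_le_less_trans order.strict_trans)

lemma adm_min_le:
  assumes "admissible M Es" "i \<le> i'" "i' < length Es"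
  shows "Min (Es!i) \<le> Min (Es!i')"
  using adm_min_lt[OF assms(1) _ assms(3)] assms(2) by (metis le_neq_implies_less less_imp_le order_refl)

lemma prod_nonneg_th: "\<forall>n\<in>set ns. n \<ge> 1 \<Longrightarrow> 0 < (\<Prod>n\<leftarrow>ns. \<theta> n)"
  by (induction ns) (auto simp: th_pos)

lemma group_lemma:
  assumes herG: "hereditary G" and sprG: "spreading G"
  shows "admissible (foldl fam_comp G (map Fs ns)) Es \<Longrightarrow> (\<forall>n\<in>set ns. n \<ge> 1) \<Longrightarrow>
    \<exists>gr. (\<forall>i i'. i \<le> i' \<longrightarrow> i' < length Es \<longrightarrow> gr i \<le> (gr i' :: nat)) \<and>
      (\<forall>I. I \<subseteq> {..<length Es} \<longrightarrow> (\<forall>i\<in>I. \<forall>i'\<in>I. i < i' \<longrightarrow> gr i < gr i') \<longrightarrow> (\<lambda>i. Min (Es!i)) ` I \<in> G) \<and>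
      (\<forall>\<gamma> x. finite (supp x) \<longrightarrow> (\<Prod>n\<leftarrow>ns. \<theta> n) * (\<Sum>i\<in>{i. i < length Es \<and> gr i = \<gamma>}. tn (restr (Es!i) x)) \<le> tn x)"
proof (induction ns arbitrary: Es rule: rev_induct)
  case Nil
  have adm: "admissible G Es" using Nil by simp
  show ?case
  proof (intro exI[of _ "\<lambda>i. i"] conjI allI impI)
    fix I assume "I \<subseteq> {..<length Es}"
    hence "(\<lambda>i. Min (Es!i)) ` I \<subseteq> Min ` set Es" by auto
    thus "(\<lambda>i. Min (Es!i)) ` I \<in> G" using adm herG unfolding admissible_def hereditary_def by blast
  next
    fix \<gamma> x assume fx: "finite (supp x)"
    have "(\<Sum>i\<in>{i. i < length Es \<and> i = \<gamma>}. tn (restr (Es!i) x)) \<le> tn x"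
    proof (cases "\<gamma> < length Es")
      case True
      hence e: "{i. i < length Es \<and> i = \<gamma>} = {\<gamma>}" by auto
      show ?thesis unfolding e using tn_restr[OF fx] by simp
    next
      case False
      hence e: "{i. i < length Es \<and> i = \<gamma>} = {}" by auto
      show ?thesis unfolding e using tn_nonneg[OF fx] by simp
    qed
    thus "(\<Prod>n\<leftarrow>[]. \<theta> n) * (\<Sum>i\<in>{i. i < length Es \<and> i = \<gamma>}. tn (restr (Es!i) x)) \<le> tn x" by simp
  qed auto
next
  case (snoc n ns)
  define B where "B = foldl fam_comp G (map Fs ns)"
  have n1: "n \<ge> 1" and ns1: "\<forall>n\<in>set ns. n \<ge> 1" using snoc.prems by auto
  have admE: "admissible (fam_comp B (Fs n)) Es" using snoc.prems by (simp add: B_def)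
  define m where "m = length Es"
  have "Min ` set Es \<in> fam_comp B (Fs n)" using admE unfolding admissible_def by simp
  then obtain Fl where MFl: "Min ` set Es = \<Union>(set Fl)" and admF: "admissible B Fl"
    and FlF: "\<forall>F\<in>set Fl. F \<in> Fs n" unfolding fam_comp_def by blast
  define r where "r = length Fl"
  have exL: "\<exists>l. l < r \<and> Min (Es!i) \<in> Fl!l" if "i < m" for i
  proof -
    have "Min (Es!i) \<in> \<Union>(set Fl)" using MFl that m_def by (metis image_eqI nth_mem)
    thus ?thesis by (auto simp: in_set_conv_nth r_def)
  qed
  have uniqL: "l = l'" if "l < r" "l' < r" "v \<in> Fl!l" "v \<in> Fl!l'" for l l' v
    using adm_disj[OF admF] that r_def by blast
  define L where "L i = (THE l. l < r \<and> Min (Es!i) \<in> Fl!l)" for i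
  have L: "L i < r \<and> Min (Es!i) \<in> Fl!(L i)" if im: "i < m" for i
  proof -
    obtain l where l: "l < r" "Min (Es!i) \<in> Fl!l" using exL[OF im] by blast
    have "L i = l" unfolding L_def by (rule the_equality) (use l uniqL in auto)
    thus ?thesis using l by simp
  qed
  have EsFin: "finite (Es!i) \<and> Es!i \<noteq> {}" if "i < m" for i using adm_fin[OF admE] that m_def by simp
  have Lmono: "L i \<le> L i'" if "i \<le> i'" "i' < m" for i i'
  proof (rule ccontr)
    assume "\<not> L i \<le> L i'"
    hence lt: "L i' < L i" by simp
    have ii: "i < m" using that by simp
    have "Max (Fl!(L i')) < Min (Fl!(L i))" using adm_lt[OF admF lt] L[OF ii] r_def by simp
    moreover have "Min (Es!i') \<le> Max (Fl!(L i'))" using L[OF that(2)] adm_fin[OF admF, of "L i'"] r_def by simp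
    moreover have "Min (Fl!(L i)) \<le> Min (Es!i)" using L[OF ii] adm_fin[OF admF, of "L i"] r_def by simp
    moreover have "Min (Es!i) \<le> Min (Es!i')" using adm_min_le[OF admE that(1)] that m_def by simp
    ultimately show False by linarith
  qed
  have Llt: "i < i'" if "L i < L i'" "i' < m" "i < m" for i i'
    using Lmono[of i' i] that by (meson leI not_le_imp_less order.strict_iff_not)
  define U where "U l = \<Union>{Es!i | i. i < m \<and> L i = l}" for l
  have FlU: "Fl!l = {Min (Es!i) | i. i < m \<and> L i = l}" if lr: "l < r" for l
  proof
    show "Fl!l \<subseteq> {Min (Es!i) | i. i < m \<and> L i = l}"
    proof
      fix v assume v: "v \<in> Fl!l"
      hence "v \<in> Min ` set Es" using MFl lr r_def by (metis UnionI nth_mem)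
      then obtain i where i: "i < m" "v = Min (Es!i)" by (auto simp: in_set_conv_nth m_def)
      have "L i = l" using uniqL[of "L i" l v] L[OF i(1)] i v lr by simp
      thus "v \<in> {Min (Es!i) | i. i < m \<and> L i = l}" using i by blast
    qed
    show "{Min (Es!i) | i. i < m \<and> L i = l} \<subseteq> Fl!l" using L by auto
  qed
  have Uprop: "finite (U l) \<and> U l \<noteq> {} \<and> Min (U l) = Min (Fl!l)" if lr: "l < r" for l
  proof -
    have fU: "finite (U l)" unfolding U_def using EsFin by auto
    have "Fl!l \<noteq> {}" using adm_fin[OF admF] lr r_def by simp
    then obtain v where "v \<in> Fl!l" by auto
    then obtain i0 where i0: "i0 < m" "L i0 = l" using FlU[OF lr] by auto
    have ne: "U l \<noteq> {}" unfolding U_def using EsFin[OF i0(1)] i0 by blast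
    have "Min (U l) \<in> U l" using fU ne by simp
    then obtain i where i: "i < m" "L i = l" "Min (U l) \<in> Es!i" unfolding U_def by blast
    have sub: "Es!i \<subseteq> U l" unfolding U_def using i by blast
    have "Min (U l) = Min (Es!i)"
    proof (rule antisym)
      show "Min (U l) \<le> Min (Es!i)" using sub EsFin[OF i(1)] fU by (meson Min_antimono)
      show "Min (Es!i) \<le> Min (U l)" using i(3) EsFin[OF i(1)] by simp
    qed
    moreover have "Min (Fl!l) = Min (Es!i)"
    proof (rule Min_eqI)
      show "finite (Fl!l)" using adm_fin[OF admF] lr r_def by simp
      show "Min (Es!i) \<in> Fl!l" using FlU[OF lr] i by blast
      fix v assume "v \<in> Fl!l"
      then obtain i' where i': "i' < m" "L i' = l" "v = Min (Es!i')" using FlU[OF lr] by auto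
      have "Es!i' \<subseteq> U l" unfolding U_def using i' by blast
      hence "Min (U l) \<le> v" using i' EsFin[OF i'(1)] fU by (meson Min_antimono order_trans Min_le Min_in)
      thus "Min (Es!i) \<le> v" using \<open>Min (U l) = Min (Es!i)\<close> by simp
    qed
    ultimately show ?thesis using fU ne by simp
  qed
  have Usep: "q < q'" if hyps: "l < l'" "l' < r" "q \<in> U l" "q' \<in> U l'" for l l' q q'
  proof -
    obtain i where i: "i < m" "L i = l" "q \<in> Es!i" using hyps(3) unfolding U_def by blast
    obtain i' where i': "i' < m" "L i' = l'" "q' \<in> Es!i'" using hyps(4) unfolding U_def by blast
    have "i < i'" using Llt[of i i'] i i' hyps by simp
    hence "Max (Es!i) < Min (Es!i')" using adm_lt[OF admE] i' m_def by simp
    moreover have "q \<le> Max (Es!i)" using i EsFin by simp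
    moreover have "Min (Es!i') \<le> q'" using i' EsFin by simp
    ultimately show ?thesis by linarith
  qed
  define Us where "Us = map U [0..<r]"
  have lenUs: "length Us = r" by (simp add: Us_def)
  have UsNth: "Us!l = U l" if "l < r" for l using that by (simp add: Us_def)
  have admU: "admissible B Us"
    unfolding admissible_def
  proof (intro conjI allI impI)
    show "\<forall>E\<in>set Us. finite E \<and> E \<noteq> {}" using Uprop by (auto simp: Us_def)
    fix l assume "Suc l < length Us"
    hence l: "Suc l < r" by (simp add: lenUs)
    have "Max (U l) \<in> U l" using Uprop[of l] l by (intro Max_in) auto
    moreover have "Min (U (Suc l)) \<in> U (Suc l)" using Uprop[of "Suc l"] l by (intro Min_in) auto
    ultimately show "Max (Us!l) < Min (Us!Suc l)" using Usep[of l "Suc l"] l UsNth by simp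
  next
    have "Min ` set Us = Min ` set Fl"
    proof -
      have "Min ` set Us = (\<lambda>l. Min (U l)) ` {..<r}" by (auto simp: Us_def)
      also have "\<dots> = (\<lambda>l. Min (Fl!l)) ` {..<r}" using Uprop by auto
      also have "\<dots> = Min ` ((!) Fl ` {0..<r})" by (simp add: image_image atLeast0LessThan)
      also have "\<dots> = Min ` set Fl" by (simp add: nth_image r_def)
      finally show ?thesis .
    qed
    thus "Min ` set Us \<in> B" using admF unfolding admissible_def by simp
  qed
  obtain gr' :: "nat \<Rightarrow> nat" where gr'mono: "\<forall>l l'. l \<le> l' \<longrightarrow> l' < length Us \<longrightarrow> gr' l \<le> gr' l'"
    and gr'sel: "\<forall>J. J \<subseteq> {..<length Us} \<longrightarrow> (\<forall>l\<in>J. \<forall>l'\<in>J. l < l' \<longrightarrow> gr' l < gr' l') \<longrightarrow> (\<lambda>l. Min (Us!l)) ` J \<in> G"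
    and gr'bd: "\<forall>\<gamma> x. finite (supp x) \<longrightarrow> (\<Prod>n\<leftarrow>ns. \<theta> n) * (\<Sum>l\<in>{l. l < length Us \<and> gr' l = \<gamma>}. tn (restr (Us!l) x)) \<le> tn x"
    using snoc.IH[OF admU[unfolded B_def] ns1] by (elim exE conjE) (simp only: lenUs)
  define gr where "gr i = gr' (L i)" for i
  show ?case
  proof (intro exI[of _ gr] conjI allI impI)
    fix i i' assume "i \<le> i'" "i' < length Es"
    thus "gr i \<le> gr i'" using Lmono[of i i'] L[of i'] gr'mono lenUs m_def gr_def by auto
  next
    fix I assume I: "I \<subseteq> {..<length Es}" and grI: "\<forall>i\<in>I. \<forall>i'\<in>I. i < i' \<longrightarrow> gr i < gr i'"
    have LI: "L i < L i'" if "i \<in> I" "i' \<in> I" "i < i'" for i i'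
    proof -
      have "gr i < gr i'" using grI that by blast
      hence "L i \<noteq> L i'" by (auto simp: gr_def)
      moreover have "L i \<le> L i'" using Lmono[of i i'] that I m_def by auto
      ultimately show ?thesis by simp
    qed
    have J: "L ` I \<subseteq> {..<length Us}" using L I lenUs m_def by auto
    have grJ: "\<forall>l\<in>L ` I. \<forall>l'\<in>L ` I. l < l' \<longrightarrow> gr' l < gr' l'"
    proof (intro ballI impI)
      fix l l' assume "l \<in> L ` I" "l' \<in> L ` I" "l < l'"
      then obtain i i' where ii: "i \<in> I" "i' \<in> I" "l = L i" "l' = L i'" "L i < L i'" by auto
      have "i < i'" using Llt[of i i'] ii I m_def by auto
      thus "gr' l < gr' l'" using grI ii gr_def by auto
    qed
    have X: "(\<lambda>l. Min (Us!l)) ` (L ` I) \<in> G" using gr'sel J grJ by blast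
    show "(\<lambda>i. Min (Es!i)) ` I \<in> G"
    proof (rule spread_img[OF herG sprG X])
      show "finite I" using I finite_subset by blast
      show "\<forall>i\<in>I. \<forall>i'\<in>I. i < i' \<longrightarrow> Min (Us!(L i)) < Min (Us!(L i'))"
      proof (intro ballI impI)
        fix i i' assume ii: "i \<in> I" "i' \<in> I" "i < i'"
        have lt: "L i < L i'" by (rule LI[OF ii])
        have r': "L i' < r" using L I ii m_def by auto
        have "Min (U (L i)) \<in> U (L i)" using Uprop[of "L i"] r' lt by (intro Min_in) auto
        moreover have "Min (U (L i')) \<in> U (L i')" using Uprop[of "L i'"] r' by (intro Min_in) auto
        ultimately show "Min (Us!(L i)) < Min (Us!(L i'))" using Usep[OF lt r'] UsNth r' lt by simp
      qed
      show "(\<lambda>i. Min (Us!(L i))) ` I \<subseteq> (\<lambda>l. Min (Us!l)) ` L ` I" by auto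
      show "\<forall>i\<in>I. \<forall>i'\<in>I. i < i' \<longrightarrow> Min (Es!i) < Min (Es!i')"
        using adm_min_lt[OF admE] I by auto
      show "\<forall>i\<in>I. Min (Us!(L i)) \<le> Min (Es!i)"
      proof
        fix i assume i: "i \<in> I"
        hence im: "i < m" using I m_def by auto
        have "Es!i \<subseteq> U (L i)" unfolding U_def using im by blast
        hence "Min (U (L i)) \<le> Min (Es!i)" using Uprop[of "L i"] L[OF im] EsFin[OF im] by (meson Min_antimono)
        thus "Min (Us!(L i)) \<le> Min (Es!i)" using UsNth L[OF im] by simp
      qed
    qed
  next
    fix \<gamma> x assume fx: "finite (supp x)"
    define S where "S = {i. i < length Es \<and> gr i = \<gamma>}"
    define T where "T = {l. l < r \<and> gr' l = \<gamma>}"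
    have sg: "(\<Sum>i\<in>S. tn (restr (Es!i) x)) = (\<Sum>l\<in>T. \<Sum>i\<in>{i\<in>S. L i = l}. tn (restr (Es!i) x))"
      by (rule sum.group[symmetric]) (use L in \<open>auto simp: S_def T_def gr_def m_def\<close>)
    have inner: "\<theta> n * (\<Sum>i\<in>{i\<in>S. L i = l}. tn (restr (Es!i) x)) \<le> tn (restr (U l) x)" if l: "l \<in> T" for l
    proof -
      define R where "R i = (if L i = l then Es!i else {})" for i
      have fU: "finite (supp (restr (U l) x))" using fx finite_supp_restr by blast
      have "\<theta> n * (\<Sum>i<m. tn (restr (R i) (restr (U l) x))) \<le> tn (restr (U l) x)"
      proof (rule tn_fam[OF n1 fU])
        show "\<forall>i<m. finite (R i)" using EsFin by (auto simp: R_def)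
        show "\<forall>i i'. i < i' \<longrightarrow> i' < m \<longrightarrow> R i \<noteq> {} \<longrightarrow> R i' \<noteq> {} \<longrightarrow> Max (R i) < Min (R i')"
          using adm_lt[OF admE] by (auto simp: R_def m_def)
        have "{Min (R i) |i. i < m \<and> R i \<noteq> {}} = {Min (Es!i) | i. i < m \<and> L i = l}"
          using EsFin by (auto simp: R_def)
        also have "\<dots> = Fl!l" using FlU l T_def by simp
        also have "\<dots> \<in> Fs n" using FlF l T_def r_def by simp
        finally show "{Min (R i) |i. i < m \<and> R i \<noteq> {}} \<in> Fs n" .
      qed
      moreover have "(\<Sum>i<m. tn (restr (R i) (restr (U l) x))) = (\<Sum>i\<in>{i\<in>S. L i = l}. tn (restr (Es!i) x))"
      proof -
        have "(\<Sum>i<m. tn (restr (R i) (restr (U l) x))) = (\<Sum>i\<in>{i. i < m \<and> L i = l}. tn (restr (R i) (restr (U l) x)))"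
          by (rule sum.mono_neutral_right) (auto simp: R_def restr_empty tn_zero)
        also have "\<dots> = (\<Sum>i\<in>{i\<in>S. L i = l}. tn (restr (Es!i) x))"
        proof (rule sum.cong)
          show "{i. i < m \<and> L i = l} = {i \<in> S. L i = l}" using l by (auto simp: S_def T_def gr_def m_def)
          fix i assume "i \<in> {i \<in> S. L i = l}"
          hence i: "i < m" "L i = l" by (auto simp: S_def m_def)
          have "Es!i \<subseteq> U l" unfolding U_def using i by blast
          hence "restr (R i) (restr (U l) x) = restr (Es!i) x" using i by (auto simp: R_def restr_def fun_eq_iff)
          thus "tn (restr (R i) (restr (U l) x)) = tn (restr (Es!i) x)" by simp
        qed
        finally show ?thesis .
      qed
      ultimately show ?thesis by simp
    qed
    have P0: "0 \<le> (\<Prod>n\<leftarrow>ns. \<theta> n)" using prod_nonneg_th[OF ns1] by simp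
    have "(\<Prod>n\<leftarrow>ns @ [n]. \<theta> n) * (\<Sum>i\<in>S. tn (restr (Es!i) x))
        = (\<Prod>n\<leftarrow>ns. \<theta> n) * (\<Sum>l\<in>T. \<theta> n * (\<Sum>i\<in>{i\<in>S. L i = l}. tn (restr (Es!i) x)))"
      by (simp add: sg sum_distrib_left mult.assoc)
    also have "\<dots> \<le> (\<Prod>n\<leftarrow>ns. \<theta> n) * (\<Sum>l\<in>T. tn (restr (U l) x))"
      using P0 inner by (intro mult_left_mono sum_mono) auto
    also have "\<dots> = (\<Prod>n\<leftarrow>ns. \<theta> n) * (\<Sum>l\<in>{l. l < length Us \<and> gr' l = \<gamma>}. tn (restr (Us!l) x))"
      using UsNth by (simp add: T_def lenUs)
    also have "\<dots> \<le> tn x" using gr'bd fx by blast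
    finally show "(\<Prod>n\<leftarrow>ns @ [n]. \<theta> n) * (\<Sum>i\<in>{i. i < length Es \<and> gr i = \<gamma>}. tn (restr (Es!i) x)) \<le> tn x"
      by (simp add: S_def)
  qed
qed

end


lemma bracket_ne: "foldl fam_comp G Ms \<noteq> {} \<Longrightarrow> G \<noteq> {}"
proof (induction Ms arbitrary: G)
  case Nil thus ?case by simp
next
  case (Cons M Ms)
  hence "fam_comp G M \<noteq> {}" by simp
  thus ?case unfolding fam_comp_def admissible_def by auto
qed

locale blk =
  fixes Fs :: "nat \<Rightarrow> nat set set" and \<theta> :: "nat \<Rightarrow> real"
    and \<epsilon> :: real and G :: "nat set set" and m0 :: nat
    and p :: nat and xs :: "nat \<Rightarrow> nat \<Rightarrow> real" and a :: "nat \<Rightarrow> real"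
  assumes reg: "\<And>n. regular (Fs n)"
    and S0_sub: "\<And>n. S0 \<subseteq> Fs n"
    and th_pos: "\<And>n. n \<ge> 1 \<Longrightarrow> 0 < \<theta> n \<and> \<theta> n < 1"
    and th_mono: "\<And>n. n \<ge> 1 \<Longrightarrow> \<theta> (Suc n) \<le> \<theta> n"
    and eps: "\<epsilon> > 0"
    and regG: "regular G"
    and hyp: "\<forall>m\<ge>m0. \<exists>ns. ns \<noteq> [] \<and> (\<forall>n\<in>set ns. n \<ge> 1) \<and>
               \<theta> m < \<epsilon> * (\<Prod>n\<leftarrow>ns. \<theta> n) \<and>
               Fs m \<subseteq> fam_bracket G (map Fs ns)"
    and blocks: "\<forall>k<p. finite (supp (xs k)) \<and> supp (xs k) \<noteq> {} \<and> tnorm (Fs 0) \<theta> Fs (xs k) = 1"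
    and succ: "\<forall>k. Suc k < p \<longrightarrow> Max (supp (xs k)) < Min (supp (xs (Suc k)))"
begin

lemma emp: "{} \<in> Fs n" using S0_sub[of n] by (auto simp: S0_def)

lemma Gne: "G \<noteq> {}"
proof -
  obtain ns where "Fs m0 \<subseteq> fam_bracket G (map Fs ns)" using hyp by blast
  hence "foldl fam_comp G (map Fs ns) \<noteq> {}" using emp[of m0] by (auto simp: fam_bracket_def)
  thus ?thesis by (rule bracket_ne)
qed

sublocale N: mtH Fs \<theta> "Fs 0"
  by unfold_locales (use th_pos emp in auto)

sublocale R: mtH Fs \<theta> G
  by unfold_locales (use th_pos emp Gne in auto)

lemma th_anti: assumes "1 \<le> n" "n \<le> n'" shows "\<theta> n' \<le> \<theta> n"
  using assms(2)
proof (induction n' rule: dec_induct)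
  case base thus ?case by simp
next
  case (step k)
  thus ?case using th_mono[of k] assms(1) by linarith
qed

definition ii where "ii k = Max (supp (xs k))"
definition v where "v T B = (\<lambda>q. \<Sum>k\<in>B. a k * restr (T k) (xs k) q)"
definition zz where "zz B = (\<lambda>q. \<Sum>k\<in>B. a k * unitvec (ii k) q)"
definition meets where "meets E T k \<longleftrightarrow> E \<inter> T k \<inter> supp (xs k) \<noteq> {}"

lemma fin_x: "k < p \<Longrightarrow> finite (supp (xs k))" using blocks by auto
lemma ne_x: "k < p \<Longrightarrow> supp (xs k) \<noteq> {}" using blocks by auto
lemma norm_x: "k < p \<Longrightarrow> N.tn (xs k) = 1" using blocks by auto

lemma blk_lt: "k < k' \<Longrightarrow> k' < p \<Longrightarrow> Max (supp (xs k)) < Min (supp (xs k'))"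
proof (induction k' rule: less_induct)
  case (less k')
  then obtain k0 where k0: "k' = Suc k0" by (cases k') auto
  have s: "Max (supp (xs k0)) < Min (supp (xs k'))" using succ less k0 by auto
  show ?case
  proof (cases "k = k0")
    case True thus ?thesis using s by simp
  next
    case False
    hence "Max (supp (xs k)) < Min (supp (xs k0))" using less k0 by auto
    moreover have "Min (supp (xs k0)) \<le> Max (supp (xs k0))"
      using fin_x ne_x less k0 by (intro min_le_max_fin) auto
    ultimately show ?thesis using s by linarith
  qed
qed

lemma pt_lt: "k < k' \<Longrightarrow> k' < p \<Longrightarrow> q \<in> supp (xs k) \<Longrightarrow> q' \<in> supp (xs k') \<Longrightarrow> q < q'"
  using blk_lt[of k k'] fin_x[of k] fin_x[of k']
  by (meson Max_ge Min_le order.strict_trans1 order.strict_trans2 order_less_trans)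

lemma le_ii: "k < p \<Longrightarrow> q \<in> supp (xs k) \<Longrightarrow> q \<le> ii k"
  unfolding ii_def using fin_x by simp

lemma ii_in: "k < p \<Longrightarrow> ii k \<in> supp (xs k)"
  unfolding ii_def using fin_x ne_x by simp

lemma ii_mono: "k < k' \<Longrightarrow> k' < p \<Longrightarrow> ii k < ii k'"
  using pt_lt ii_in by (meson order_less_trans)

lemma ii_smono: "B \<subseteq> {..<p} \<Longrightarrow> \<forall>k\<in>B. \<forall>k'\<in>B. k < k' \<longrightarrow> ii k < ii k'"
  using ii_mono by blast

lemma ii_inj: "B \<subseteq> {..<p} \<Longrightarrow> inj_on ii B"
  by (rule inj_of_smono[OF ii_smono])

lemma zz_at: assumes "B \<subseteq> {..<p}" "k \<in> B" shows "zz B (ii k) = a k"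
proof -
  have "zz B (ii k) = (\<Sum>k'\<in>B. if k' = k then a k else 0)"
    unfolding zz_def
  proof (rule sum.cong)
    fix k' assume "k' \<in> B"
    thus "a k' * unitvec (ii k') (ii k) = (if k' = k then a k else 0)"
      using ii_inj[OF assms(1)] assms by (auto simp: unitvec_def dest: inj_onD)
  qed simp
  also have "\<dots> = a k" using assms finite_subset[OF assms(1)] by (simp add: sum.delta)
  finally show ?thesis .
qed

lemma zz_out: "q \<notin> ii ` B \<Longrightarrow> zz B q = 0"
  unfolding zz_def by (rule sum.neutral) (auto simp: unitvec_def)

lemma supp_zz: "supp (zz B) \<subseteq> ii ` B"
  using zz_out by (auto simp: supp_def)

lemma fin_zz: "B \<subseteq> {..<p} \<Longrightarrow> finite (supp (zz B))"
  using supp_zz by (meson finite_subset finite_imageI finite_lessThan)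

lemma restr_zz: assumes "B' \<subseteq> B" "B \<subseteq> {..<p}" shows "restr (ii ` B') (zz B) = zz B'"
proof
  fix q
  show "restr (ii ` B') (zz B) q = zz B' q"
  proof (cases "q \<in> ii ` B'")
    case True
    then obtain k where "k \<in> B'" "q = ii k" by auto
    thus ?thesis using zz_at[OF assms(2)] zz_at[of B' k] assms by (auto simp: restr_def)
  next
    case False
    thus ?thesis using zz_out by (simp add: restr_def)
  qed
qed

lemma sum_a_zz: assumes "A \<subseteq> B" "B \<subseteq> {..<p}" shows "(\<Sum>k\<in>A. \<bar>a k\<bar>) = (\<Sum>q\<in>ii ` A. \<bar>zz B q\<bar>)"
proof -
  have "(\<Sum>q\<in>ii ` A. \<bar>zz B q\<bar>) = (\<Sum>k\<in>A. \<bar>zz B (ii k)\<bar>)"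
    using inj_on_subset[OF ii_inj[OF assms(2)] assms(1)] by (simp add: sum.reindex)
  also have "\<dots> = (\<Sum>k\<in>A. \<bar>a k\<bar>)"
    by (rule sum.cong) (use zz_at assms in auto)
  finally show ?thesis by simp
qed

lemma fin_v: "B \<subseteq> {..<p} \<Longrightarrow> finite (supp (v T B))"
  unfolding v_def
  by (rule finite_supp_sum) (auto intro: finite_supp_restr fin_x finite_subset)

lemma fin_rx: "k < p \<Longrightarrow> finite (supp (restr E (xs k)))"
  using fin_x finite_supp_restr by blast

lemma tn_rx: "k < p \<Longrightarrow> N.tn (restr E (xs k)) \<le> 1"
  using N.tn_restr[OF fin_x] norm_x by metis

lemma ti_rx: "k < p \<Longrightarrow> N.ti j (restr E (xs k)) \<le> 1"
  using N.tn_ge[OF fin_rx] tn_rx order_trans by blast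

lemma small_bd: assumes "B \<subseteq> {..<p}" shows "N.ti j (v T B) \<le> (\<Sum>k\<in>B. \<bar>a k\<bar>)"
proof -
  have "N.ti j (v T B) \<le> (\<Sum>k\<in>B. \<bar>a k\<bar> * N.ti j (restr (T k) (xs k)))"
    unfolding v_def by (rule N.ti_sum) (use assms finite_subset fin_rx in auto)
  also have "\<dots> \<le> (\<Sum>k\<in>B. \<bar>a k\<bar> * 1)"
    using ti_rx assms by (intro sum_mono mult_left_mono) auto
  finally show ?thesis by simp
qed


end



context blk
begin

lemma order_meets:
  assumes adm: "admissible M Es" and i: "i < length Es" and i': "i' < length Es"
    and kk: "k < k'" "k' < p" and m1: "meets (Es!i) T k" and m2: "meets (Es!i') T' k'"
  shows "i \<le> i'"
proof (rule ccontr)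
  assume "\<not> i \<le> i'"
  hence lt: "i' < i" by simp
  obtain q where q: "q \<in> Es!i" "q \<in> supp (xs k)" using m1 by (auto simp: meets_def)
  obtain q' where q': "q' \<in> Es!i'" "q' \<in> supp (xs k')" using m2 by (auto simp: meets_def)
  have "q' \<le> Max (Es!i')" using q' adm_fin[OF adm i'] by simp
  moreover have "Min (Es!i) \<le> q" using q adm_fin[OF adm i] by simp
  moreover have "Max (Es!i') < Min (Es!i)" using adm_lt[OF adm lt i] .
  moreover have "q < q'" using pt_lt[OF kk q(2) q'(2)] .
  ultimately show False by linarith
qed

lemma meets_le_ii:
  assumes "meets E T k" "k < p" "finite E" shows "Min E \<le> ii k"
proof -
  obtain q where "q \<in> E" "q \<in> supp (xs k)" using assms by (auto simp: meets_def)
  thus ?thesis using le_ii[OF assms(2)] assms(3) by (meson Min_le order_trans)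
qed

lemma not_meets_restr: assumes nm: "\<not> meets E T k" shows "restr E (restr (T k) (xs k)) = (\<lambda>_. 0)"
proof (rule ext)
  fix q
  show "restr E (restr (T k) (xs k)) q = 0"
  proof (cases "q \<in> E \<and> q \<in> T k")
    case True
    hence "xs k q = 0" using nm unfolding meets_def supp_def by blast
    thus ?thesis by (simp add: restr_def)
  next
    case False thus ?thesis by (auto simp: restr_def)
  qed
qed

lemma regF: "hereditary (Fs n)" "spreading (Fs n)" using reg[of n] by (auto simp: regular_def)
lemma regG': "hereditary G" "spreading G" using regG by (auto simp: regular_def)

lemma finB: "B \<subseteq> {..<p} \<Longrightarrow> finite B"
  by (rule finite_subset[of _ "{..<p}"]) auto

lemma leaf_bd:
  assumes B: "B \<subseteq> {..<p}"
  shows "hnorm (Fs 0) (v T B) \<le> hnorm (Fs 0) (zz B)"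
  unfolding hnorm_def[of "Fs 0" "v T B"]
proof (rule cSUP_least)
  show "Fs 0 \<noteq> {}" using emp by auto
  fix F assume F: "F \<in> Fs 0"
  show "(\<Sum>q\<in>F. \<bar>v T B q\<bar>) \<le> hnorm (Fs 0) (zz B)"
  proof (cases "finite F")
    case False thus ?thesis using N.hn_nonneg[OF fin_zz[OF B]] by simp
  next
    case finF: True
    define B' where "B' = {k\<in>B. meets F T k}"
    have "(\<Sum>q\<in>F. \<bar>v T B q\<bar>) \<le> (\<Sum>q\<in>F. \<Sum>k\<in>B. \<bar>a k\<bar> * \<bar>restr (T k) (xs k) q\<bar>)"
    proof (rule sum_mono)
      fix q
      have "\<bar>v T B q\<bar> \<le> (\<Sum>k\<in>B. \<bar>a k * restr (T k) (xs k) q\<bar>)" unfolding v_def by (rule sum_abs)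
      thus "\<bar>v T B q\<bar> \<le> (\<Sum>k\<in>B. \<bar>a k\<bar> * \<bar>restr (T k) (xs k) q\<bar>)" by (simp add: abs_mult)
    qed
    also have "\<dots> = (\<Sum>k\<in>B. \<bar>a k\<bar> * (\<Sum>q\<in>F. \<bar>restr (T k) (xs k) q\<bar>))"
      unfolding sum_distrib_left by (rule sum.swap)
    also have "\<dots> = (\<Sum>k\<in>B'. \<bar>a k\<bar> * (\<Sum>q\<in>F. \<bar>restr (T k) (xs k) q\<bar>))"
    proof (rule sum.mono_neutral_right)
      show "finite B" by (rule finB[OF B])
      show "B' \<subseteq> B" by (auto simp: B'_def)
      show "\<forall>k\<in>B - B'. \<bar>a k\<bar> * (\<Sum>q\<in>F. \<bar>restr (T k) (xs k) q\<bar>) = 0"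
        unfolding B'_def meets_def restr_def supp_def by (auto intro!: sum.neutral split: if_splits)
    qed
    also have "\<dots> \<le> (\<Sum>k\<in>B'. \<bar>a k\<bar> * 1)"
    proof (intro sum_mono mult_left_mono)
      fix k assume k: "k \<in> B'"
      hence kp: "k < p" using B B'_def by auto
      have "(\<Sum>q\<in>F. \<bar>restr (T k) (xs k) q\<bar>) \<le> hnorm (Fs 0) (restr (T k) (xs k))"
        by (rule N.hn_ge[OF fin_rx[OF kp] F])
      also have "\<dots> \<le> 1" using N.tn_hn[OF fin_rx[OF kp, where E="T k"]] tn_rx[OF kp, where E="T k"] by linarith
      finally show "(\<Sum>q\<in>F. \<bar>restr (T k) (xs k) q\<bar>) \<le> 1" .
    qed simp
    also have "\<dots> = (\<Sum>q\<in>ii ` B'. \<bar>zz B q\<bar>)" using sum_a_zz[of B' B] B by (simp add: B'_def)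
    also have "\<dots> \<le> hnorm (Fs 0) (zz B)"
    proof (rule N.hn_ge[OF fin_zz[OF B]])
      define h where "h k = Min (F \<inter> T k \<inter> supp (xs k))" for k
      have hk: "h k \<in> F \<inter> T k \<inter> supp (xs k)" if "k \<in> B'" for k
      proof -
        have "k < p" using that B B'_def by auto
        hence "finite (F \<inter> T k \<inter> supp (xs k))" using fin_x by auto
        thus ?thesis unfolding h_def using that by (intro Min_in) (auto simp: B'_def meets_def)
      qed
      show "ii ` B' \<in> Fs 0"
      proof (rule spread_img[OF regF F])
        have B'B: "B' \<subseteq> {..<p}" using B unfolding B'_def by auto
        show "finite B'" by (rule finB[OF B'B])
        show "\<forall>k\<in>B'. \<forall>k'\<in>B'. k < k' \<longrightarrow> h k < h k'"
        proof (intro ballI impI)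
          fix k k' assume kk: "k \<in> B'" "k' \<in> B'" "k < k'"
          have "h k \<in> supp (xs k)" "h k' \<in> supp (xs k')" using hk kk by auto
          moreover have "k' < p" using kk B'B by auto
          ultimately show "h k < h k'" using pt_lt[OF kk(3)] by blast
        qed
        show "h ` B' \<subseteq> F" using hk by auto
        show "\<forall>k\<in>B'. \<forall>k'\<in>B'. k < k' \<longrightarrow> ii k < ii k'" by (rule ii_smono[OF B'B])
        show "\<forall>k\<in>B'. h k \<le> ii k"
        proof
          fix k assume k: "k \<in> B'"
          thus "h k \<le> ii k" using hk[OF k] le_ii[of k "h k"] B'B by auto
        qed
      qed
    qed
    finally show ?thesis .
  qed
qed

lemma zfam:
  assumes X: "mtH Fs \<theta> H'" and n: "n \<ge> 1" and adm: "admissible (Fs n) Es" and B: "B \<subseteq> {..<p}"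
    and C: "\<forall>i<length Es. C i \<subseteq> B"
    and sep: "\<forall>i i'. i < i' \<longrightarrow> i' < length Es \<longrightarrow> (\<forall>k\<in>C i. \<forall>k'\<in>C i'. k < k')"
    and lo: "\<forall>i<length Es. \<forall>k\<in>C i. Min (Es!i) \<le> ii k"
  shows "\<theta> n * (\<Sum>i<length Es. tnorm H' \<theta> Fs (zz (C i))) \<le> tnorm H' \<theta> Fs (zz B)"
proof -
  interpret X: mtH Fs \<theta> H' by (rule X)
  define m where "m = length Es"
  define R where "R i = ii ` C i" for i
  have finC: "finite (C i)" if "i < m" for i using C B that m_def by (meson finite_lessThan finite_subset order_trans)
  have exMax: "\<exists>k\<in>C i. Max (R i) = ii k" if "i < m" "C i \<noteq> {}" for i
  proof -
    have "Max (R i) \<in> R i" using finC that unfolding R_def by (intro Max_in) auto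
    thus ?thesis unfolding R_def by auto
  qed
  have exMin: "\<exists>k\<in>C i. Min (R i) = ii k" if "i < m" "C i \<noteq> {}" for i
  proof -
    have "Min (R i) \<in> R i" using finC that unfolding R_def by (intro Min_in) auto
    thus ?thesis unfolding R_def by auto
  qed
  have sepR: "Max (R i) < Min (R i')" if hy: "i < i'" "i' < m" "C i \<noteq> {}" "C i' \<noteq> {}" for i i'
  proof -
    have "i < m" using hy by simp
    then obtain k where k: "k \<in> C i" "Max (R i) = ii k" using exMax[of i] hy by blast
    obtain k' where k': "k' \<in> C i'" "Min (R i') = ii k'" using exMin[of i'] hy by blast
    have "k < k'" using sep hy k k' m_def by blast
    moreover have "k' < p" using k' C B hy m_def by auto
    ultimately show ?thesis using ii_mono k k' by simp
  qed
  have fam: "\<theta> n * (\<Sum>i<m. X.tn (restr (R i) (zz B))) \<le> X.tn (zz B)"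
  proof (rule X.tn_fam[OF n fin_zz[OF B]])
    show "\<forall>i<m. finite (R i)" using finC by (auto simp: R_def)
    show "\<forall>i i'. i < i' \<longrightarrow> i' < m \<longrightarrow> R i \<noteq> {} \<longrightarrow> R i' \<noteq> {} \<longrightarrow> Max (R i) < Min (R i')"
      using sepR by (auto simp: R_def)
    define I where "I = {i. i < m \<and> C i \<noteq> {}}"
    have "(\<lambda>i. Min (R i)) ` I \<in> Fs n"
    proof (rule spread_img[OF regF _ _ _ _ _ ])
      show "Min ` set Es \<in> Fs n" using adm unfolding admissible_def by simp
      show "finite I" unfolding I_def by simp
      show "\<forall>i\<in>I. \<forall>i'\<in>I. i < i' \<longrightarrow> Min (Es!i) < Min (Es!i')"
        using N.adm_min_lt[OF adm] unfolding I_def m_def by auto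
      show "(\<lambda>i. Min (Es!i)) ` I \<subseteq> Min ` set Es" unfolding I_def m_def by auto
      show "\<forall>i\<in>I. \<forall>i'\<in>I. i < i' \<longrightarrow> Min (R i) < Min (R i')"
      proof (intro ballI impI)
        fix i i' assume ii: "i \<in> I" "i' \<in> I" "i < i'"
        have "Min (R i) \<le> Max (R i)" using finC ii unfolding R_def I_def by (intro min_le_max_fin) auto
        thus "Min (R i) < Min (R i')" using sepR[of i i'] ii unfolding I_def by auto
      qed
      show "\<forall>i\<in>I. Min (Es!i) \<le> Min (R i)"
        using exMin lo unfolding I_def m_def by fastforce
    qed
    moreover have "(\<lambda>i. Min (R i)) ` I = {Min (R i) |i. i < m \<and> R i \<noteq> {}}"
      unfolding I_def R_def by auto
    ultimately show "{Min (R i) |i. i < m \<and> R i \<noteq> {}} \<in> Fs n" by simp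
  qed
  have "restr (R i) (zz B) = zz (C i)" if "i < m" for i
    unfolding R_def by (rule restr_zz) (use C B that m_def in auto)
  thus ?thesis using fam m_def by simp
qed

lemma sing_bd:
  assumes n: "n \<ge> 1" and A: "A \<subseteq> {..<p}" and AF: "ii ` A \<in> Fs n"
  shows "\<theta> n * (\<Sum>k\<in>A. \<bar>a k\<bar>) \<le> N.tn (zz A)"
proof -
  define R where "R k = (if k \<in> A then {ii k} else {})" for k
  have fam: "\<theta> n * (\<Sum>k<p. N.tn (restr (R k) (zz A))) \<le> N.tn (zz A)"
  proof (rule N.tn_fam[OF n fin_zz[OF A]])
    show "\<forall>i<p. finite (R i)" by (simp add: R_def)
    show "\<forall>i i'. i < i' \<longrightarrow> i' < p \<longrightarrow> R i \<noteq> {} \<longrightarrow> R i' \<noteq> {} \<longrightarrow> Max (R i) < Min (R i')"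
      using ii_mono by (auto simp: R_def)
    have "{Min (R i) |i. i < p \<and> R i \<noteq> {}} = ii ` A" using A by (auto simp: R_def)
    thus "{Min (R i) |i. i < p \<and> R i \<noteq> {}} \<in> Fs n" using AF by simp
  qed
  have "(\<Sum>k\<in>A. \<bar>a k\<bar>) \<le> (\<Sum>k\<in>A. N.tn (restr (R k) (zz A)))"
  proof (rule sum_mono)
    fix k assume k: "k \<in> A"
    have "{ii k} \<in> Fs 0" using S0_sub[of 0] by (auto simp: S0_def)
    hence "(\<Sum>q\<in>{ii k}. \<bar>restr {ii k} (zz A) q\<bar>) \<le> hnorm (Fs 0) (restr {ii k} (zz A))"
      by (intro N.hn_ge finite_supp_restr fin_zz A)
    also have "\<dots> \<le> N.tn (restr {ii k} (zz A))" by (intro N.tn_hn finite_supp_restr fin_zz A)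
    finally show "\<bar>a k\<bar> \<le> N.tn (restr (R k) (zz A))"
      using zz_at[OF A k] k by (simp add: R_def restr_def)
  qed
  also have "\<dots> = (\<Sum>k<p. N.tn (restr (R k) (zz A)))"
    by (rule sum.mono_neutral_left) (use A in \<open>auto simp: R_def restr_empty N.tn_zero\<close>)
  finally have "\<theta> n * (\<Sum>k\<in>A. \<bar>a k\<bar>) \<le> \<theta> n * (\<Sum>k<p. N.tn (restr (R k) (zz A)))"
    using th_pos[OF n] by (intro mult_left_mono) auto
  thus ?thesis using fam by linarith
qed

lemma G_bd:
  assumes A: "A \<subseteq> B" and B: "B \<subseteq> {..<p}" and AG: "ii ` A \<in> G"
  shows "(\<Sum>k\<in>A. \<bar>a k\<bar>) \<le> R.tn (zz B)"
proof -
  have "(\<Sum>k\<in>A. \<bar>a k\<bar>) = (\<Sum>q\<in>ii ` A. \<bar>zz B q\<bar>)" by (rule sum_a_zz[OF A B])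
  also have "\<dots> \<le> hnorm G (zz B)" by (rule R.hn_ge[OF fin_zz[OF B] AG])
  also have "\<dots> \<le> R.tn (zz B)" by (rule R.tn_hn[OF fin_zz[OF B]])
  finally show ?thesis .
qed


definition CC where "CC Es T B i = {k\<in>B. meets (Es!i) T k \<and> (\<forall>i'<length Es. meets (Es!i') T k \<longrightarrow> i' = i)}"
definition AA where "AA Es T B = {k\<in>B. \<exists>i<length Es. \<exists>i'<length Es. i \<noteq> i' \<and> meets (Es!i) T k \<and> meets (Es!i') T k}"
definition cc where "cc Es T k = (LEAST i. i < length Es \<and> meets (Es!i) T k)"

lemma CC_sub: "CC Es T B i \<subseteq> B" by (auto simp: CC_def)
lemma AA_p: "k \<in> AA Es T B \<Longrightarrow> B \<subseteq> {..<p} \<Longrightarrow> k < p" by (auto simp: AA_def)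
lemma CC_p: "k \<in> CC Es T B i \<Longrightarrow> B \<subseteq> {..<p} \<Longrightarrow> k < p" by (auto simp: CC_def)
lemma AA_sub: "AA Es T B \<subseteq> B" by (auto simp: AA_def)
lemma CC_AA: "i < length Es \<Longrightarrow> CC Es T B i \<inter> AA Es T B = {}" by (auto simp: CC_def AA_def)
lemma CC_disj: "i < length Es \<Longrightarrow> i' < length Es \<Longrightarrow> i \<noteq> i' \<Longrightarrow> CC Es T B i \<inter> CC Es T B i' = {}"
  by (auto simp: CC_def)

lemma decomp_vec:
  assumes i: "i < length Es" and B: "B \<subseteq> {..<p}"
  shows "restr (Es!i) (v T B) = (\<lambda>q. v (\<lambda>k. Es!i \<inter> T k) (CC Es T B i) q
     + (\<Sum>k\<in>AA Es T B. a k * restr (Es!i) (restr (T k) (xs k)) q))"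
proof
  fix q
  define f where "f k = a k * restr (Es!i \<inter> T k) (xs k) q" for k
  have fB: "finite B" by (rule finB[OF B])
  have "restr (Es!i) (v T B) q = (\<Sum>k\<in>B. f k)"
    by (simp add: v_def restr_def f_def sum.If_cases)
  also have "\<dots> = (\<Sum>k\<in>CC Es T B i \<union> AA Es T B. f k)"
  proof (rule sum.mono_neutral_right[OF fB])
    show "CC Es T B i \<union> AA Es T B \<subseteq> B" using CC_sub AA_sub by blast
    show "\<forall>k\<in>B - (CC Es T B i \<union> AA Es T B). f k = 0"
    proof
      fix k assume k: "k \<in> B - (CC Es T B i \<union> AA Es T B)"
      have "\<not> meets (Es!i) T k" using k i by (auto simp: CC_def AA_def)
      thus "f k = 0" by (auto simp: f_def meets_def restr_def supp_def)
    qed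
  qed
  also have "\<dots> = (\<Sum>k\<in>CC Es T B i. f k) + (\<Sum>k\<in>AA Es T B. f k)"
  proof (rule sum.union_disjoint)
    show "finite (CC Es T B i)" by (rule finite_subset[OF CC_sub fB])
    show "finite (AA Es T B)" by (rule finite_subset[OF AA_sub fB])
    show "CC Es T B i \<inter> AA Es T B = {}" by (rule CC_AA[OF i])
  qed
  also have "\<dots> = v (\<lambda>k. Es!i \<inter> T k) (CC Es T B i) q
     + (\<Sum>k\<in>AA Es T B. a k * restr (Es!i) (restr (T k) (xs k)) q)"
    by (simp add: v_def f_def restr_restr)
  finally show "restr (Es!i) (v T B) q = v (\<lambda>k. Es!i \<inter> T k) (CC Es T B i) q
     + (\<Sum>k\<in>AA Es T B. a k * restr (Es!i) (restr (T k) (xs k)) q)" .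
qed

lemma decomp_ti:
  assumes i: "i < length Es" and B: "B \<subseteq> {..<p}"
  shows "N.ti j (restr (Es!i) (v T B)) \<le> N.ti j (v (\<lambda>k. Es!i \<inter> T k) (CC Es T B i))
     + (\<Sum>k\<in>AA Es T B. \<bar>a k\<bar> * N.ti j (restr (Es!i) (restr (T k) (xs k))))"
proof -
  have BA: "AA Es T B \<subseteq> {..<p}" using AA_sub B by blast
  have BC: "CC Es T B i \<subseteq> {..<p}" using CC_sub B by blast
  have f1: "finite (supp (v (\<lambda>k. Es!i \<inter> T k) (CC Es T B i)))" by (rule fin_v[OF BC])
  have f2: "finite (supp (\<lambda>q. \<Sum>k\<in>AA Es T B. a k * restr (Es!i) (restr (T k) (xs k)) q))"
  proof (rule finite_supp_sum)
    show "finite (AA Es T B)" by (meson finite_lessThan finite_subset BA)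
    show "\<forall>k\<in>AA Es T B. finite (supp (restr (Es!i) (restr (T k) (xs k))))"
      using BA by (auto intro!: finite_supp_restr fin_rx)
  qed
  have "N.ti j (restr (Es!i) (v T B)) \<le> N.ti j (v (\<lambda>k. Es!i \<inter> T k) (CC Es T B i))
     + N.ti j (\<lambda>q. \<Sum>k\<in>AA Es T B. a k * restr (Es!i) (restr (T k) (xs k)) q)"
    unfolding decomp_vec[OF i B] by (rule N.ti_add[OF f1 f2])
  also have "N.ti j (\<lambda>q. \<Sum>k\<in>AA Es T B. a k * restr (Es!i) (restr (T k) (xs k)) q)
      \<le> (\<Sum>k\<in>AA Es T B. \<bar>a k\<bar> * N.ti j (restr (Es!i) (restr (T k) (xs k))))"
  proof (rule N.ti_sum)
    show "finite (AA Es T B)" by (meson finite_lessThan finite_subset BA)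
    show "\<forall>k\<in>AA Es T B. finite (supp (restr (Es!i) (restr (T k) (xs k))))"
      using BA by (auto intro!: finite_supp_restr fin_rx)
  qed
  finally show ?thesis by simp
qed

lemma decomp:
  assumes B: "B \<subseteq> {..<p}" and w: "0 < w" and n: "n \<ge> 1"
  shows "w * (\<theta> n * (\<Sum>E\<leftarrow>Es. N.ti j (restr E (v T B))))
    \<le> (\<Sum>i<length Es. (w * \<theta> n) * N.ti j (v (\<lambda>k. Es!i \<inter> T k) (CC Es T B i)))
      + w * (\<Sum>k\<in>AA Es T B. \<bar>a k\<bar> * (\<theta> n * (\<Sum>i<length Es. N.ti j (restr (Es!i) (restr (T k) (xs k))))))"
proof -
  define X where "X i = N.ti j (v (\<lambda>k. Es!i \<inter> T k) (CC Es T B i))" for i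
  define Z where "Z k i = N.ti j (restr (Es!i) (restr (T k) (xs k)))" for k i
  define m where "m = length Es"
  define A where "A = AA Es T B"
  have th: "0 \<le> \<theta> n" using th_pos[OF n] by simp
  have "(\<Sum>E\<leftarrow>Es. N.ti j (restr E (v T B))) = (\<Sum>i<m. N.ti j (restr (Es!i) (v T B)))"
    unfolding m_def by (rule sum_list_nth)
  also have "\<dots> \<le> (\<Sum>i<m. X i + (\<Sum>k\<in>A. \<bar>a k\<bar> * Z k i))"
    by (rule sum_mono) (use decomp_ti B in \<open>auto simp: X_def Z_def A_def m_def\<close>)
  also have "\<dots> = (\<Sum>i<m. X i) + (\<Sum>i<m. \<Sum>k\<in>A. \<bar>a k\<bar> * Z k i)"
    by (rule sum.distrib)
  also have "(\<Sum>i<m. \<Sum>k\<in>A. \<bar>a k\<bar> * Z k i) = (\<Sum>k\<in>A. \<Sum>i<m. \<bar>a k\<bar> * Z k i)"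
    by (rule sum.swap)
  also have "\<dots> = (\<Sum>k\<in>A. \<bar>a k\<bar> * (\<Sum>i<m. Z k i))"
    by (rule sum.cong) (simp_all add: sum_distrib_left)
  finally have 1: "(\<Sum>E\<leftarrow>Es. N.ti j (restr E (v T B))) \<le> (\<Sum>i<m. X i) + (\<Sum>k\<in>A. \<bar>a k\<bar> * (\<Sum>i<m. Z k i))" .
  have "w * (\<theta> n * (\<Sum>E\<leftarrow>Es. N.ti j (restr E (v T B)))) \<le> w * (\<theta> n * ((\<Sum>i<m. X i) + (\<Sum>k\<in>A. \<bar>a k\<bar> * (\<Sum>i<m. Z k i))))"
    using 1 w th by (intro mult_left_mono) auto
  also have "\<dots> = (w * \<theta> n) * (\<Sum>i<m. X i) + w * (\<theta> n * (\<Sum>k\<in>A. \<bar>a k\<bar> * (\<Sum>i<m. Z k i)))"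
    by (simp only: distrib_left mult.assoc)
  also have "(w * \<theta> n) * (\<Sum>i<m. X i) = (\<Sum>i<m. (w * \<theta> n) * X i)"
    by (rule sum_distrib_left)
  also have "\<theta> n * (\<Sum>k\<in>A. \<bar>a k\<bar> * (\<Sum>i<m. Z k i)) = (\<Sum>k\<in>A. \<bar>a k\<bar> * (\<theta> n * (\<Sum>i<m. Z k i)))"
    by (simp only: sum_distrib_left mult.left_commute)
  finally show ?thesis by (simp only: X_def Z_def A_def m_def)
qed

lemma Y_bd:
  assumes k: "k < p" and n: "n \<ge> 1" and adm: "admissible (Fs n) Es"
  shows "0 \<le> \<theta> n * (\<Sum>i<length Es. N.ti j (restr (Es!i) (restr (T k) (xs k))))
    \<and> \<theta> n * (\<Sum>i<length Es. N.ti j (restr (Es!i) (restr (T k) (xs k)))) \<le> 1"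
proof
  have "\<theta> n * (\<Sum>E\<leftarrow>Es. N.ti j (restr E (restr (T k) (xs k)))) \<le> N.ti (Suc j) (restr (T k) (xs k))"
    by (rule N.ti_adm[OF n adm fin_rx[OF k]])
  also have "\<dots> \<le> 1" by (rule ti_rx[OF k])
  finally show "\<theta> n * (\<Sum>i<length Es. N.ti j (restr (Es!i) (restr (T k) (xs k)))) \<le> 1"
    by (simp add: sum_list_nth)
  show "0 \<le> \<theta> n * (\<Sum>i<length Es. N.ti j (restr (Es!i) (restr (T k) (xs k))))"
    using th_pos[OF n] N.ti_bd fin_rx[OF k] finite_supp_restr by (intro mult_nonneg_nonneg sum_nonneg) auto
qed


lemma CC_sep:
  assumes adm: "admissible M Es" and B: "B \<subseteq> {..<p}" and ii': "i < i'" "i' < length Es"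
    and k: "k \<in> CC Es T B i" and k': "k' \<in> CC Es T B i'"
  shows "k < k'"
proof (rule ccontr)
  assume "\<not> k < k'"
  moreover have "k \<noteq> k'" using CC_disj[of i Es i' T B] ii' k k' by auto
  ultimately have lt: "k' < k" by simp
  have kp: "k < p" using k B CC_sub[of Es T B i] by auto
  have m1: "meets (Es!i') T k'" using k' by (simp add: CC_def)
  have m2: "meets (Es!i) T k" using k by (simp add: CC_def)
  have il: "i < length Es" using ii' by simp
  have "i' \<le> i" by (rule order_meets[OF adm ii'(2) il lt kp m1 m2])
  thus False using ii' by simp
qed

lemma CC_lo:
  assumes adm: "admissible M Es" and B: "B \<subseteq> {..<p}" and i: "i < length Es" and k: "k \<in> CC Es T B i"
  shows "Min (Es!i) \<le> ii k"
proof (rule meets_le_ii)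
  show "meets (Es!i) T k" using k by (simp add: CC_def)
  show "k < p" using k B CC_sub[of Es T B i] by auto
  show "finite (Es!i)" using adm_fin[OF adm i] by simp
qed

lemma eps_sum:
  assumes B: "B \<subseteq> {..<p}" and A': "A' \<subseteq> AA Es T B"
  shows "(\<Sum>i<length Es. \<Sum>k\<in>CC Es T B i. \<bar>a k\<bar>) + (\<Sum>k\<in>A'. \<bar>a k\<bar>) \<le> (\<Sum>k\<in>B. \<bar>a k\<bar>)"
proof -
  have fB: "finite B" by (rule finB[OF B])
  define U where "U = (\<Union>i\<in>{..<length Es}. CC Es T B i)"
  have "(\<Sum>i<length Es. \<Sum>k\<in>CC Es T B i. \<bar>a k\<bar>) = (\<Sum>k\<in>U. \<bar>a k\<bar>)"
    unfolding U_def
  proof (rule sum.UNION_disjoint[symmetric])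
    show "finite {..<length Es}" by simp
    show "\<forall>i\<in>{..<length Es}. finite (CC Es T B i)" using finite_subset[OF CC_sub fB] by blast
    show "\<forall>i\<in>{..<length Es}. \<forall>j\<in>{..<length Es}. i \<noteq> j \<longrightarrow> CC Es T B i \<inter> CC Es T B j = {}"
      using CC_disj by blast
  qed
  moreover have "(\<Sum>k\<in>U. \<bar>a k\<bar>) + (\<Sum>k\<in>A'. \<bar>a k\<bar>) = (\<Sum>k\<in>U \<union> A'. \<bar>a k\<bar>)"
  proof (rule sum.union_disjoint[symmetric])
    show "finite U" unfolding U_def using finite_subset[OF CC_sub fB] by blast
    show "finite A'" using finite_subset[OF A' finite_subset[OF AA_sub fB]] .
    show "U \<inter> A' = {}" unfolding U_def using A' CC_AA by blast
  qed
  moreover have "(\<Sum>k\<in>U \<union> A'. \<bar>a k\<bar>) \<le> (\<Sum>k\<in>B. \<bar>a k\<bar>)"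
  proof (rule sum_mono2[OF fB])
    show "U \<union> A' \<subseteq> B" unfolding U_def using A' AA_sub[of Es T B] CC_sub[of Es T B] by blast
  qed auto
  ultimately show ?thesis by linarith
qed

lemma cc_prop:
  assumes k: "k \<in> AA Es T B"
  shows "cc Es T k < length Es \<and> meets (Es!(cc Es T k)) T k
    \<and> (\<forall>i<length Es. meets (Es!i) T k \<longrightarrow> cc Es T k \<le> i)
    \<and> (\<exists>i2<length Es. cc Es T k < i2 \<and> meets (Es!i2) T k)"
proof -
  obtain i i' where ii: "i < length Es" "i' < length Es" "i \<noteq> i'" "meets (Es!i) T k" "meets (Es!i') T k"
    using k by (auto simp: AA_def)
  have P: "cc Es T k < length Es \<and> meets (Es!(cc Es T k)) T k"
    unfolding cc_def by (rule LeastI[of _ i]) (use ii in auto)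
  have L: "\<forall>i<length Es. meets (Es!i) T k \<longrightarrow> cc Es T k \<le> i"
    unfolding cc_def by (auto intro: Least_le)
  have "cc Es T k \<le> i" "cc Es T k \<le> i'" using L ii by auto
  hence "\<exists>i2<length Es. cc Es T k < i2 \<and> meets (Es!i2) T k"
  proof (cases "cc Es T k = i")
    case True
    hence "cc Es T k < i'" using \<open>cc Es T k \<le> i'\<close> ii(3) by simp
    thus ?thesis using ii by blast
  next
    case False
    hence "cc Es T k < i" using \<open>cc Es T k \<le> i\<close> by simp
    thus ?thesis using ii by blast
  qed
  thus ?thesis using P L by blast
qed

lemma cc_mono:
  assumes adm: "admissible M Es" and B: "B \<subseteq> {..<p}"
    and k: "k \<in> AA Es T B" and k': "k' \<in> AA Es T B" and lt: "k < k'"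
  shows "cc Es T k < cc Es T k'"
proof -
  obtain i2 where i2: "i2 < length Es" "cc Es T k < i2" "meets (Es!i2) T k" using cc_prop[OF k] by blast
  have "k' < p" using AA_p[OF k' B] .
  have "i2 \<le> cc Es T k'"
    by (rule order_meets[OF adm i2(1) _ lt \<open>k' < p\<close> i2(3)]) (use cc_prop[OF k'] in auto)
  thus ?thesis using i2 by simp
qed

lemma AA_Fs:
  assumes adm: "admissible (Fs n) Es" and B: "B \<subseteq> {..<p}"
  shows "ii ` AA Es T B \<in> Fs n"
proof (rule spread_img[OF regF _ _ _ _ _ ])
  show "Min ` set Es \<in> Fs n" using adm unfolding admissible_def by simp
  show "finite (AA Es T B)" using B AA_sub by (meson finite_lessThan finite_subset order_trans)
  show "\<forall>k\<in>AA Es T B. \<forall>k'\<in>AA Es T B. k < k' \<longrightarrow> Min (Es!(cc Es T k)) < Min (Es!(cc Es T k'))"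
  proof (intro ballI impI)
    fix k k' assume kk: "k \<in> AA Es T B" "k' \<in> AA Es T B" "k < k'"
    show "Min (Es!(cc Es T k)) < Min (Es!(cc Es T k'))"
      by (rule N.adm_min_lt[OF adm cc_mono[OF adm B kk]]) (use cc_prop[OF kk(2)] in simp)
  qed
  show "(\<lambda>k. Min (Es!(cc Es T k))) ` AA Es T B \<subseteq> Min ` set Es" using cc_prop by auto
  show "\<forall>k\<in>AA Es T B. \<forall>k'\<in>AA Es T B. k < k' \<longrightarrow> ii k < ii k'"
    using ii_smono[of "AA Es T B"] B AA_sub by (meson order_trans)
  show "\<forall>k\<in>AA Es T B. Min (Es!(cc Es T k)) \<le> ii k"
  proof
    fix k assume k: "k \<in> AA Es T B"
    show "Min (Es!(cc Es T k)) \<le> ii k"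
      by (rule meets_le_ii) (use k cc_prop[OF k] AA_p[OF k B] adm_fin[OF adm] in auto)
  qed
qed

definition AA1 where "AA1 Es T B gr = {k\<in>AA Es T B. \<exists>i<length Es. \<exists>i'<length Es.
   meets (Es!i) T k \<and> meets (Es!i') T k \<and> gr i \<noteq> (gr i' :: nat)}"

lemma AA1_G:
  assumes adm: "admissible M Es" and B: "B \<subseteq> {..<p}"
    and grmono: "\<forall>i i'. i \<le> i' \<longrightarrow> i' < length Es \<longrightarrow> gr i \<le> (gr i' :: nat)"
    and grsel: "\<forall>I. I \<subseteq> {..<length Es} \<longrightarrow> (\<forall>i\<in>I. \<forall>i'\<in>I. i < i' \<longrightarrow> gr i < gr i') \<longrightarrow> (\<lambda>i. Min (Es!i)) ` I \<in> G"
  shows "ii ` AA1 Es T B gr \<in> G"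
proof -
  define A1 where "A1 = AA1 Es T B gr"
  have A1A: "A1 \<subseteq> AA Es T B" by (auto simp: A1_def AA1_def)
  have key: "gr (cc Es T k) < gr (cc Es T k')" if kk: "k \<in> A1" "k' \<in> A1" "k < k'" for k k'
  proof -
    obtain i1 i2 where i: "i1 < length Es" "i2 < length Es" "meets (Es!i1) T k" "meets (Es!i2) T k" "gr i1 \<noteq> gr i2"
      using kk(1) by (auto simp: A1_def AA1_def)
    have kA: "k \<in> AA Es T B" "k' \<in> AA Es T B" using kk A1A by auto
    have c1: "gr (cc Es T k) \<le> gr i1" "gr (cc Es T k) \<le> gr i2"
      using cc_prop[OF kA(1)] i grmono by auto
    have "\<exists>i3. i3 < length Es \<and> meets (Es!i3) T k \<and> gr (cc Es T k) < gr i3"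
    proof (cases "gr (cc Es T k) = gr i1")
      case True
      hence "gr (cc Es T k) < gr i2" using c1(2) i(5) by simp
      thus ?thesis using i by blast
    next
      case False
      hence "gr (cc Es T k) < gr i1" using c1(1) by simp
      thus ?thesis using i by blast
    qed
    then obtain i3 where i3: "i3 < length Es" "meets (Es!i3) T k" "gr (cc Es T k) < gr i3" by blast
    have "k' < p" using AA_p[OF kA(2) B] .
    have "i3 \<le> cc Es T k'"
      by (rule order_meets[OF adm i3(1) _ kk(3) \<open>k' < p\<close> i3(2)]) (use cc_prop[OF kA(2)] in auto)
    hence "gr i3 \<le> gr (cc Es T k')" using grmono cc_prop[OF kA(2)] by auto
    thus ?thesis using i3 by simp
  qed
  define I where "I = (\<lambda>k. cc Es T k) ` A1"
  have Isub: "I \<subseteq> {..<length Es}" using cc_prop A1A by (auto simp: I_def)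
  have Imono: "\<forall>i\<in>I. \<forall>i'\<in>I. i < i' \<longrightarrow> gr i < gr i'"
    proof (intro ballI impI)
      fix l l' assume l: "l \<in> I" "l' \<in> I" "l < l'"
      then obtain k k' where kk: "k \<in> A1" "k' \<in> A1" "l = cc Es T k" "l' = cc Es T k'" by (auto simp: I_def)
      have "k < k'"
      proof (rule ccontr)
        assume "\<not> k < k'"
        hence "k' < k \<or> k' = k" by auto
        thus False
        proof
          assume "k' < k"
          hence "cc Es T k' < cc Es T k" using cc_mono[OF adm B] kk A1A by blast
          thus False using l kk by simp
        qed (use l kk in simp)
      qed
      thus "gr l < gr l'" using key kk by simp
    qed
  have X: "(\<lambda>i. Min (Es!i)) ` I \<in> G"
  proof -
    have "I \<subseteq> {..<length Es} \<longrightarrow> (\<forall>i\<in>I. \<forall>i'\<in>I. i < i' \<longrightarrow> gr i < gr i') \<longrightarrow> (\<lambda>i. Min (Es!i)) ` I \<in> G"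
      using grsel by (rule spec)
    thus ?thesis using Isub Imono by blast
  qed
  have "ii ` A1 \<in> G"
  proof (rule spread_img[OF regG'(1) regG'(2) X])
    show "finite A1" using B A1A AA_sub by (meson finite_lessThan finite_subset order_trans)
    show "\<forall>k\<in>A1. \<forall>k'\<in>A1. k < k' \<longrightarrow> Min (Es!(cc Es T k)) < Min (Es!(cc Es T k'))"
    proof (intro ballI impI)
      fix k k' assume kk: "k \<in> A1" "k' \<in> A1" "k < k'"
      hence kA: "k \<in> AA Es T B" "k' \<in> AA Es T B" using A1A by auto
      show "Min (Es!(cc Es T k)) < Min (Es!(cc Es T k'))"
        by (rule N.adm_min_lt[OF adm cc_mono[OF adm B kA kk(3)]]) (use cc_prop[OF kA(2)] in simp)
    qed
    show "(\<lambda>k. Min (Es!(cc Es T k))) ` A1 \<subseteq> (\<lambda>i. Min (Es!i)) ` I" by (auto simp: I_def)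
    show "\<forall>k\<in>A1. \<forall>k'\<in>A1. k < k' \<longrightarrow> ii k < ii k'"
      using ii_smono[of A1] B AA_sub A1A by (meson order_trans)
    show "\<forall>k\<in>A1. Min (Es!(cc Es T k)) \<le> ii k"
    proof
      fix k assume k: "k \<in> A1"
      hence kA: "k \<in> AA Es T B" using A1A by auto
      show "Min (Es!(cc Es T k)) \<le> ii k"
        by (rule meets_le_ii) (use kA cc_prop[OF kA] AA_p[OF kA B] adm_fin[OF adm] in auto)
    qed
  qed
  thus ?thesis by (simp add: A1_def)
qed

lemma AA2_bd:
  assumes k: "k \<in> AA Es T B - AA1 Es T B gr" and B: "B \<subseteq> {..<p}"
    and Pi: "0 < Pi" and thn: "\<theta> n < \<epsilon> * Pi"
    and grbd: "\<forall>\<gamma> x. finite (supp x) \<longrightarrow> Pi * (\<Sum>i\<in>{i. i < length Es \<and> gr i = \<gamma>}. N.tn (restr (Es!i) x)) \<le> N.tn x"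
    and n: "n \<ge> 1"
  shows "\<theta> n * (\<Sum>i<length Es. N.ti j (restr (Es!i) (restr (T k) (xs k)))) \<le> \<epsilon>"
proof -
  define u where "u = restr (T k) (xs k)"
  have kp: "k < p" using AA_p[of k Es T B] k B by blast
  have fu: "finite (supp u)" unfolding u_def by (rule fin_rx[OF kp])
  have kA: "k \<in> AA Es T B" using k by simp
  define \<gamma> where "\<gamma> = gr (cc Es T k)"
  have same: "gr i = \<gamma>" if "i < length Es" "meets (Es!i) T k" for i
    using k that cc_prop[OF kA] unfolding AA1_def \<gamma>_def by blast
  have "(\<Sum>i<length Es. N.ti j (restr (Es!i) u)) = (\<Sum>i\<in>{i. i < length Es \<and> gr i = \<gamma>}. N.ti j (restr (Es!i) u))"
  proof (rule sum.mono_neutral_right)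
    show "\<forall>i\<in>{..<length Es} - {i. i < length Es \<and> gr i = \<gamma>}. N.ti j (restr (Es!i) u) = 0"
    proof
      fix i assume "i \<in> {..<length Es} - {i. i < length Es \<and> gr i = \<gamma>}"
      hence "\<not> meets (Es!i) T k" using same by auto
      thus "N.ti j (restr (Es!i) u) = 0" unfolding u_def by (simp add: not_meets_restr N.ti_zero)
    qed
  qed auto
  also have "\<dots> \<le> (\<Sum>i\<in>{i. i < length Es \<and> gr i = \<gamma>}. N.tn (restr (Es!i) u))"
    by (rule sum_mono) (rule N.tn_ge[OF finite_supp_restr[OF fu]])
  finally have S1: "(\<Sum>i<length Es. N.ti j (restr (Es!i) u)) \<le> (\<Sum>i\<in>{i. i < length Es \<and> gr i = \<gamma>}. N.tn (restr (Es!i) u))" .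
  have S0: "0 \<le> (\<Sum>i<length Es. N.ti j (restr (Es!i) u))"
    using N.ti_bd finite_supp_restr[OF fu] by (intro sum_nonneg) auto
  have S2: "Pi * (\<Sum>i\<in>{i. i < length Es \<and> gr i = \<gamma>}. N.tn (restr (Es!i) u)) \<le> 1"
    using grbd fu tn_rx[OF kp] unfolding u_def by (meson order_trans)
  have "\<theta> n * (\<Sum>i<length Es. N.ti j (restr (Es!i) u)) \<le> (\<epsilon> * Pi) * (\<Sum>i<length Es. N.ti j (restr (Es!i) u))"
    using thn S0 by (intro mult_right_mono) auto
  also have "\<dots> \<le> (\<epsilon> * Pi) * (\<Sum>i\<in>{i. i < length Es \<and> gr i = \<gamma>}. N.tn (restr (Es!i) u))"
    using S1 eps Pi by (intro mult_left_mono) auto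
  also have "\<dots> = \<epsilon> * (Pi * (\<Sum>i\<in>{i. i < length Es \<and> gr i = \<gamma>}. N.tn (restr (Es!i) u)))" by simp
  also have "\<dots> \<le> \<epsilon> * 1" using S2 eps by (intro mult_left_mono) auto
  finally show ?thesis unfolding u_def by simp
qed

end



context blk
begin

lemma prod_le1: "\<forall>n\<in>set ns. n \<ge> 1 \<Longrightarrow> (\<Prod>n\<leftarrow>ns. \<theta> n) \<le> 1"
proof (induction ns)
  case Nil thus ?case by simp
next
  case (Cons n ns)
  hence "0 < \<theta> n" "\<theta> n < 1" "(\<Prod>n\<leftarrow>ns. \<theta> n) \<le> 1" "0 < (\<Prod>n\<leftarrow>ns. \<theta> n)"
    using th_pos N.prod_nonneg_th by auto
  thus ?case by (simp add: mult_le_one)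
qed

definition ths where "ths = \<theta> (max 1 m0)"

lemma ths_pos: "0 < ths" unfolding ths_def using th_pos by simp

lemma ths_le: "1 \<le> n \<Longrightarrow> n < m0 \<Longrightarrow> ths \<le> \<theta> n"
  unfolding ths_def by (rule th_anti) auto

lemma mtH0: "mtH Fs \<theta> (Fs 0)" by unfold_locales (use th_pos emp in auto)
lemma mtHG: "mtH Fs \<theta> G" by unfold_locales (use th_pos emp Gne in auto)

lemma ts_least_w:
  assumes w: "0 < w" and h: "w * hnorm H x \<le> Bd"
    and t: "\<And>n Es. n \<ge> 1 \<Longrightarrow> admissible (Fs n) Es \<Longrightarrow> w * (\<theta> n * (\<Sum>E\<leftarrow>Es. f (restr E x))) \<le> Bd"
  shows "w * tstep H \<theta> Fs f x \<le> Bd"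
proof -
  have "tstep H \<theta> Fs f x \<le> Bd / w"
  proof (rule N.ts_least)
    show "hnorm H x \<le> Bd / w" using h w by (simp add: pos_le_divide_eq mult.commute)
    fix n Es assume "1 \<le> n" "admissible (Fs n) Es"
    thus "\<theta> n * (\<Sum>E\<leftarrow>Es. f (restr E x)) \<le> Bd / w" using t w by (simp add: pos_le_divide_eq mult.commute)
  qed
  thus ?thesis using w by (simp add: pos_le_divide_eq mult.commute)
qed

abbreviation RHS where "RHS d w B \<equiv> (1 + real d / ths) * w * N.tn (zz B) + w * R.tn (zz B) + \<epsilon> * (\<Sum>k\<in>B. \<bar>a k\<bar>)"

lemma RHS_parts:
  assumes B: "B \<subseteq> {..<p}" and w: "0 < w"
  shows "0 \<le> N.tn (zz B)" "0 \<le> R.tn (zz B)" "0 \<le> (\<Sum>k\<in>B. \<bar>a k\<bar>)" "w * N.tn (zz B) \<le> (1 + real d / ths) * w * N.tn (zz B)"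
proof -
  show n0: "0 \<le> N.tn (zz B)" by (rule N.tn_nonneg[OF fin_zz[OF B]])
  show "0 \<le> R.tn (zz B)" by (rule R.tn_nonneg[OF fin_zz[OF B]])
  show "0 \<le> (\<Sum>k\<in>B. \<bar>a k\<bar>)" by (simp add: sum_nonneg)
  have "1 \<le> 1 + real d / ths" using ths_pos by simp
  hence "1 * (w * N.tn (zz B)) \<le> (1 + real d / ths) * (w * N.tn (zz B))"
    using n0 w by (intro mult_right_mono) auto
  thus "w * N.tn (zz B) \<le> (1 + real d / ths) * w * N.tn (zz B)" by (simp add: mult.assoc)
qed

lemma easy_hn:
  assumes B: "B \<subseteq> {..<p}" and w: "0 < w"
  shows "w * hnorm (Fs 0) (v T B) \<le> RHS d w B"
proof -
  have "hnorm (Fs 0) (v T B) \<le> N.tn (zz B)"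
    using leaf_bd[OF B, where T=T] N.tn_hn[OF fin_zz[OF B]] by linarith
  hence "w * hnorm (Fs 0) (v T B) \<le> w * N.tn (zz B)" using w by simp
  moreover have "0 \<le> w * R.tn (zz B)" using RHS_parts(2)[OF B w] w by simp
  moreover have "0 \<le> \<epsilon> * (\<Sum>k\<in>B. \<bar>a k\<bar>)" using RHS_parts(3)[OF B w] eps by simp
  ultimately show ?thesis using RHS_parts(4)[OF B w, of d] by linarith
qed

lemma easy_small:
  assumes B: "B \<subseteq> {..<p}" and w: "0 < w" "w < \<epsilon>"
  shows "w * N.ti j (v T B) \<le> RHS d w B"
proof -
  have "w * N.ti j (v T B) \<le> w * (\<Sum>k\<in>B. \<bar>a k\<bar>)" using small_bd[OF B] w by simp
  also have "\<dots> \<le> \<epsilon> * (\<Sum>k\<in>B. \<bar>a k\<bar>)" using w by (intro mult_right_mono) (auto simp: sum_nonneg)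
  moreover have "0 \<le> w * R.tn (zz B)" using RHS_parts(2)[OF B w(1)] w by simp
  moreover have "0 \<le> w * N.tn (zz B)" using RHS_parts(1)[OF B w(1)] w by simp
  ultimately show ?thesis using RHS_parts(4)[OF B w(1), of d] by linarith
qed

lemma node_bd:
  assumes IH: "\<And>d T B w. B \<subseteq> {..<p} \<Longrightarrow> 0 < w \<Longrightarrow> w \<le> 1 \<Longrightarrow> w * \<theta> 1 ^ d < \<epsilon> \<Longrightarrow>
        w * N.ti j (v T B) \<le> RHS d w B"
    and B: "B \<subseteq> {..<p}" and w: "0 < w" "w \<le> 1" and wd: "w * \<theta> 1 ^ d < \<epsilon>" and we: "\<epsilon> \<le> w"
    and n: "n \<ge> 1" and adm: "admissible (Fs n) Es"
  shows "w * (\<theta> n * (\<Sum>E\<leftarrow>Es. N.ti j (restr E (v T B)))) \<le> RHS d w B"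
proof -
  define m where "m = length Es"
  define C where "C i = CC Es T B i" for i
  define A where "A = AA Es T B"
  define Y where "Y k = \<theta> n * (\<Sum>i<m. N.ti j (restr (Es!i) (restr (T k) (xs k))))" for k
  have thn: "0 < \<theta> n" "\<theta> n < 1" using th_pos[OF n] by auto
  have dec: "w * (\<theta> n * (\<Sum>E\<leftarrow>Es. N.ti j (restr E (v T B))))
    \<le> (\<Sum>i<m. (w * \<theta> n) * N.ti j (v (\<lambda>k. Es!i \<inter> T k) (C i))) + w * (\<Sum>k\<in>A. \<bar>a k\<bar> * Y k)"
    using decomp[OF B w(1) n, where j=j and Es=Es and T=T] by (simp add: m_def C_def A_def Y_def)
  have CB: "C i \<subseteq> {..<p}" for i using CC_sub B unfolding C_def by blast
  have AB: "A \<subseteq> {..<p}" using AA_sub B unfolding A_def by blast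
  have Ybd: "0 \<le> Y k \<and> Y k \<le> 1" if "k \<in> A" for k
    using Y_bd[OF _ n adm] that AB unfolding Y_def m_def by blast
  have fA: "finite A" using AB by (meson finite_lessThan finite_subset)
  have N0: "0 \<le> N.tn (zz B)" and R0: "0 \<le> R.tn (zz B)" and S0: "0 \<le> (\<Sum>k\<in>B. \<bar>a k\<bar>)"
    using RHS_parts[OF B w(1)] by auto
  have sep: "\<forall>i i'. i < i' \<longrightarrow> i' < length Es \<longrightarrow> (\<forall>k\<in>C i. \<forall>k'\<in>C i'. k < k')"
    using CC_sep[OF adm B] unfolding C_def by blast
  have lo: "\<forall>i<length Es. \<forall>k\<in>C i. Min (Es!i) \<le> ii k"
    using CC_lo[OF adm B] unfolding C_def by blast
  have CsubB: "\<forall>i<length Es. C i \<subseteq> B" using CC_sub unfolding C_def by blast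
  have epsC: "(\<Sum>i<m. \<Sum>k\<in>C i. \<bar>a k\<bar>) + (\<Sum>k\<in>A'. \<bar>a k\<bar>) \<le> (\<Sum>k\<in>B. \<bar>a k\<bar>)" if "A' \<subseteq> A" for A'
    using eps_sum[OF B, where A'=A' and Es=Es and T=T] that unfolding C_def A_def m_def by simp
  show ?thesis
  proof (cases "n < m0")
    case True
    have "d \<noteq> 0"
    proof
      assume "d = 0"
      thus False using wd we by simp
    qed
    then obtain d' where d': "d = Suc d'" by (cases d) auto
    have th1: "\<theta> n \<le> \<theta> 1" using th_anti[OF _ n] by simp
    have child: "(w * \<theta> n) * N.ti j (v (\<lambda>k. Es!i \<inter> T k) (C i))
        \<le> (1 + real d' / ths) * (w * \<theta> n) * N.tn (zz (C i)) + (w * \<theta> n) * R.tn (zz (C i))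
          + \<epsilon> * (\<Sum>k\<in>C i. \<bar>a k\<bar>)" for i
    proof (rule IH[OF CB])
      show "0 < w * \<theta> n" using w thn by simp
      show "w * \<theta> n \<le> 1" using w thn by (simp add: mult_le_one)
      have "w * \<theta> n * \<theta> 1 ^ d' \<le> w * \<theta> 1 * \<theta> 1 ^ d'"
        using w th1 th_pos[of 1] by (intro mult_right_mono mult_left_mono) auto
      also have "\<dots> = w * \<theta> 1 ^ d" by (simp add: d')
      finally show "w * \<theta> n * \<theta> 1 ^ d' < \<epsilon>" using wd by simp
    qed
    have sumN: "\<theta> n * (\<Sum>i<m. N.tn (zz (C i))) \<le> N.tn (zz B)"
      using zfam[OF mtH0 n adm B CsubB sep lo] by (simp add: m_def)
    have sumR: "\<theta> n * (\<Sum>i<m. R.tn (zz (C i))) \<le> R.tn (zz B)"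
      using zfam[OF mtHG n adm B CsubB sep lo] by (simp add: m_def)
    have "(\<Sum>i<m. (w * \<theta> n) * N.ti j (v (\<lambda>k. Es!i \<inter> T k) (C i)))
        \<le> (\<Sum>i<m. (1 + real d' / ths) * (w * \<theta> n) * N.tn (zz (C i)) + (w * \<theta> n) * R.tn (zz (C i))
          + \<epsilon> * (\<Sum>k\<in>C i. \<bar>a k\<bar>))"
      by (rule sum_mono) (rule child)
    also have "\<dots> = ((1 + real d' / ths) * w) * (\<theta> n * (\<Sum>i<m. N.tn (zz (C i))))
        + w * (\<theta> n * (\<Sum>i<m. R.tn (zz (C i)))) + \<epsilon> * (\<Sum>i<m. \<Sum>k\<in>C i. \<bar>a k\<bar>)"
      by (simp add: sum.distrib sum_distrib_left mult.assoc mult.left_commute)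
    also have "\<dots> \<le> ((1 + real d' / ths) * w) * N.tn (zz B) + w * R.tn (zz B) + \<epsilon> * (\<Sum>i<m. \<Sum>k\<in>C i. \<bar>a k\<bar>)"
    proof -
      have "0 \<le> (1 + real d' / ths) * w" using ths_pos w by simp
      thus ?thesis using sumN sumR w eps
        by (intro add_mono mult_left_mono) auto
    qed
    finally have ch: "(\<Sum>i<m. (w * \<theta> n) * N.ti j (v (\<lambda>k. Es!i \<inter> T k) (C i)))
        \<le> ((1 + real d' / ths) * w) * N.tn (zz B) + w * R.tn (zz B) + \<epsilon> * (\<Sum>i<m. \<Sum>k\<in>C i. \<bar>a k\<bar>)" .
    have spl: "w * (\<Sum>k\<in>A. \<bar>a k\<bar> * Y k) \<le> w * (\<Sum>k\<in>A. \<bar>a k\<bar>)"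
      using Ybd w by (intro mult_left_mono sum_mono) (auto simp: mult_le_cancel_left1 intro: mult_left_le)
    have "\<theta> n * (\<Sum>k\<in>A. \<bar>a k\<bar>) \<le> N.tn (zz A)"
      by (rule sing_bd[OF n AB]) (use AA_Fs[OF adm B] in \<open>simp add: A_def\<close>)
    also have "\<dots> \<le> N.tn (zz B)"
      using N.tn_restr[OF fin_zz[OF B], of "ii ` A"] restr_zz[of A B] B AA_sub[of Es T B] unfolding A_def by simp
    finally have tA: "\<theta> n * (\<Sum>k\<in>A. \<bar>a k\<bar>) \<le> N.tn (zz B)" .
    have "ths * (\<Sum>k\<in>A. \<bar>a k\<bar>) \<le> \<theta> n * (\<Sum>k\<in>A. \<bar>a k\<bar>)"
      by (rule mult_right_mono[OF ths_le[OF n True]]) (simp add: sum_nonneg)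
    hence "ths * (\<Sum>k\<in>A. \<bar>a k\<bar>) \<le> N.tn (zz B)" using tA by linarith
    hence "(\<Sum>k\<in>A. \<bar>a k\<bar>) \<le> N.tn (zz B) / ths" using ths_pos by (simp add: pos_le_divide_eq mult.commute)
    hence spl2: "w * (\<Sum>k\<in>A. \<bar>a k\<bar>) \<le> w * (N.tn (zz B) / ths)" using w by (intro mult_left_mono) auto
    have epsB: "\<epsilon> * (\<Sum>i<m. \<Sum>k\<in>C i. \<bar>a k\<bar>) \<le> \<epsilon> * (\<Sum>k\<in>B. \<bar>a k\<bar>)"
      using epsC[of "{}"] eps by simp
    have alg: "(1 + real d / ths) * w * N.tn (zz B) = ((1 + real d' / ths) * w) * N.tn (zz B) + w * (N.tn (zz B) / ths)"
      using ths_pos by (simp add: d' field_simps)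
    show ?thesis using dec ch spl spl2 epsB alg by linarith
  next
    case False
    hence nm: "n \<ge> m0" by simp
    obtain ns where ns: "ns \<noteq> []" "\<forall>n\<in>set ns. n \<ge> 1" "\<theta> n < \<epsilon> * (\<Prod>n\<leftarrow>ns. \<theta> n)"
      "Fs n \<subseteq> fam_bracket G (map Fs ns)" using hyp nm by blast
    have adm2: "admissible (foldl fam_comp G (map Fs ns)) Es"
      using adm ns(4) unfolding admissible_def fam_bracket_def by blast
    obtain gr :: "nat \<Rightarrow> nat" where grmono: "\<forall>i i'. i \<le> i' \<longrightarrow> i' < length Es \<longrightarrow> gr i \<le> gr i'"
      and grsel: "\<forall>I. I \<subseteq> {..<length Es} \<longrightarrow> (\<forall>i\<in>I. \<forall>i'\<in>I. i < i' \<longrightarrow> gr i < gr i') \<longrightarrow> (\<lambda>i. Min (Es!i)) ` I \<in> G"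
      and grbd: "\<forall>\<gamma> x. finite (supp x) \<longrightarrow> (\<Prod>n\<leftarrow>ns. \<theta> n) * (\<Sum>i\<in>{i. i < length Es \<and> gr i = \<gamma>}. N.tn (restr (Es!i) x)) \<le> N.tn x"
      using N.group_lemma[OF regG'(1) regG'(2) adm2 ns(2)] by (elim exE conjE) blast
    have Pi: "0 < (\<Prod>n\<leftarrow>ns. \<theta> n)" using N.prod_nonneg_th[OF ns(2)] .
    have Pi1: "(\<Prod>n\<leftarrow>ns. \<theta> n) \<le> 1" using prod_le1[OF ns(2)] .
    have wth: "w * \<theta> n < \<epsilon>"
    proof -
      have "w * \<theta> n \<le> \<theta> n" using w thn by (simp add: mult_le_cancel_right1)
      also have "\<dots> < \<epsilon> * (\<Prod>n\<leftarrow>ns. \<theta> n)" by (rule ns(3))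
      also have "\<dots> \<le> \<epsilon>" using Pi1 eps by (simp add: mult_le_cancel_left1)
      finally show ?thesis .
    qed
    have child: "(w * \<theta> n) * N.ti j (v (\<lambda>k. Es!i \<inter> T k) (C i)) \<le> \<epsilon> * (\<Sum>k\<in>C i. \<bar>a k\<bar>)" for i
    proof -
      have "(w * \<theta> n) * N.ti j (v (\<lambda>k. Es!i \<inter> T k) (C i)) \<le> (w * \<theta> n) * (\<Sum>k\<in>C i. \<bar>a k\<bar>)"
        using small_bd[OF CB] w thn by (intro mult_left_mono) auto
      also have "\<dots> \<le> \<epsilon> * (\<Sum>k\<in>C i. \<bar>a k\<bar>)"
        using wth by (intro mult_right_mono) (auto simp: sum_nonneg)
      finally show ?thesis .
    qed
    define A1 where "A1 = AA1 Es T B gr"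
    have A1A: "A1 \<subseteq> A" unfolding A1_def A_def AA1_def by auto
    have A1G: "ii ` A1 \<in> G" unfolding A1_def by (rule AA1_G[OF adm B grmono grsel])
    have sA: "(\<Sum>k\<in>A. \<bar>a k\<bar> * Y k) = (\<Sum>k\<in>A1. \<bar>a k\<bar> * Y k) + (\<Sum>k\<in>A - A1. \<bar>a k\<bar> * Y k)"
      using sum.subset_diff[OF A1A fA] by (simp add: add.commute)
    have s1: "(\<Sum>k\<in>A1. \<bar>a k\<bar> * Y k) \<le> (\<Sum>k\<in>A1. \<bar>a k\<bar>)"
    proof (rule sum_mono)
      fix k assume "k \<in> A1"
      hence "Y k \<le> 1" using Ybd A1A by blast
      thus "\<bar>a k\<bar> * Y k \<le> \<bar>a k\<bar>" by (simp add: mult_left_le)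
    qed
    have s1': "(\<Sum>k\<in>A1. \<bar>a k\<bar>) \<le> R.tn (zz B)"
      by (rule G_bd[OF _ B A1G]) (use A1A AA_sub[of Es T B] in \<open>auto simp: A_def\<close>)
    have s2: "w * (\<Sum>k\<in>A - A1. \<bar>a k\<bar> * Y k) \<le> \<epsilon> * (\<Sum>k\<in>A - A1. \<bar>a k\<bar>)"
    proof -
      have "w * (\<Sum>k\<in>A - A1. \<bar>a k\<bar> * Y k) \<le> 1 * (\<Sum>k\<in>A - A1. \<bar>a k\<bar> * Y k)"
        using w Ybd by (intro mult_right_mono sum_nonneg) auto
      also have "\<dots> \<le> (\<Sum>k\<in>A - A1. \<bar>a k\<bar> * \<epsilon>)"
      proof (simp, rule sum_mono)
        fix k assume k: "k \<in> A - A1"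
        have "Y k \<le> \<epsilon>"
          unfolding Y_def m_def
          by (rule AA2_bd[OF _ B Pi ns(3) grbd n]) (use k in \<open>simp add: A_def A1_def\<close>)
        thus "\<bar>a k\<bar> * Y k \<le> \<bar>a k\<bar> * \<epsilon>" by (simp add: mult_left_mono)
      qed
      finally show ?thesis by (simp add: sum_distrib_left mult.commute)
    qed
    have chs: "(\<Sum>i<m. (w * \<theta> n) * N.ti j (v (\<lambda>k. Es!i \<inter> T k) (C i))) \<le> \<epsilon> * (\<Sum>i<m. \<Sum>k\<in>C i. \<bar>a k\<bar>)"
      using child by (simp add: sum_distrib_left sum_mono)
    have eB: "\<epsilon> * (\<Sum>i<m. \<Sum>k\<in>C i. \<bar>a k\<bar>) + \<epsilon> * (\<Sum>k\<in>A - A1. \<bar>a k\<bar>) \<le> \<epsilon> * (\<Sum>k\<in>B. \<bar>a k\<bar>)"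
      using epsC[of "A - A1"] eps by (simp add: distrib_left[symmetric])
    have wR: "w * (\<Sum>k\<in>A1. \<bar>a k\<bar> * Y k) \<le> w * R.tn (zz B)"
      using s1 s1' w by (meson mult_left_mono order_trans less_imp_le)
    have "w * (\<Sum>k\<in>A. \<bar>a k\<bar> * Y k) = w * (\<Sum>k\<in>A1. \<bar>a k\<bar> * Y k) + w * (\<Sum>k\<in>A - A1. \<bar>a k\<bar> * Y k)"
      by (simp add: sA distrib_left)
    moreover have "0 \<le> (1 + real d / ths) * w * N.tn (zz B)" using ths_pos w N0 by simp
    ultimately show ?thesis using dec chs eB wR s2 by linarith
  qed
qed

lemma main_claim:
  "\<forall>d T B w. B \<subseteq> {..<p} \<longrightarrow> 0 < w \<longrightarrow> w \<le> 1 \<longrightarrow> w * \<theta> 1 ^ d < \<epsilon> \<longrightarrow>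
     w * N.ti j (v T B) \<le> RHS d w B"
proof (induction j)
  case 0
  show ?case using easy_hn by simp
next
  case (Suc j)
  show ?case
  proof (intro allI impI)
    fix d T B w assume B: "B \<subseteq> {..<p}" and w: "0 < w" "w \<le> 1" and wd: "w * \<theta> 1 ^ d < \<epsilon>"
    show "w * N.ti (Suc j) (v T B) \<le> RHS d w B"
    proof (cases "w < \<epsilon>")
      case True thus ?thesis using easy_small[OF B w(1) True] by blast
    next
      case False
      hence we: "\<epsilon> \<le> w" by simp
      show ?thesis unfolding titer.simps
      proof (rule ts_least_w[OF w(1)])
        show "w * hnorm (Fs 0) (v T B) \<le> RHS d w B" by (rule easy_hn[OF B w(1)])
        fix n Es assume n: "1 \<le> n" and adm: "admissible (Fs n) Es"
        show "w * (\<theta> n * (\<Sum>E\<leftarrow>Es. N.ti j (restr E (v T B)))) \<le> RHS d w B"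
          by (rule node_bd[OF _ B w wd we n adm]) (use Suc.IH in blast)
      qed
    qed
  qed
qed

lemma final_bd:
  assumes D: "\<theta> 1 ^ D < \<epsilon>"
  shows "N.tn (v (\<lambda>_. UNIV) {..<p}) \<le> RHS D 1 {..<p}"
  unfolding tnorm_def[of "Fs 0" \<theta> Fs "v (\<lambda>_. UNIV) {..<p}"]
proof (rule cSUP_least)
  fix j
  show "N.ti j (v (\<lambda>_. UNIV) {..<p}) \<le> RHS D 1 {..<p}"
  proof -
    have "{..<p} \<subseteq> {..<p} \<longrightarrow> 0 < (1::real) \<longrightarrow> 1 \<le> (1::real) \<longrightarrow> 1 * \<theta> 1 ^ D < \<epsilon> \<longrightarrow>
        1 * N.ti j (v (\<lambda>_. UNIV) {..<p}) \<le> RHS D 1 {..<p}"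
      by (rule main_claim[of j, THEN spec[of _ D], THEN spec[of _ "\<lambda>_. UNIV"], THEN spec[of _ "{..<p}"], THEN spec[of _ 1]])
    thus ?thesis using D by simp
  qed
qed simp

end

theorem proposition3:
  fixes Fs :: "nat \<Rightarrow> nat set set" and \<theta> :: "nat \<Rightarrow> real"
    and \<epsilon> :: real and G :: "nat set set" and m0 :: nat
  assumes reg: "\<And>n. regular (Fs n)"
    and S0_sub: "\<And>n. S0 \<subseteq> Fs n"
    and regU: "regular (\<Union>n. Fs n)"
    and th_pos: "\<And>n. n \<ge> 1 \<Longrightarrow> 0 < \<theta> n \<and> \<theta> n < 1"
    and th_mono: "\<And>n. n \<ge> 1 \<Longrightarrow> \<theta> (Suc n) \<le> \<theta> n"
    and th_null: "\<theta> \<longlonglongrightarrow> 0"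
    and eps: "\<epsilon> > 0"
    and regG: "regular G"
    and hyp: "\<forall>m\<ge>m0. \<exists>ns. ns \<noteq> [] \<and> (\<forall>n\<in>set ns. n \<ge> 1) \<and>
               \<theta> m < \<epsilon> * (\<Prod>n\<leftarrow>ns. \<theta> n) \<and>
               Fs m \<subseteq> fam_bracket G (map Fs ns)"
  shows "\<exists>K::real. \<forall>(p::nat) (xs::nat \<Rightarrow> nat \<Rightarrow> real) (a::nat \<Rightarrow> real).
     ((\<forall>k<p. finite (supp (xs k)) \<and> supp (xs k) \<noteq> {} \<and> tnorm (Fs 0) \<theta> Fs (xs k) = 1) \<and>
      (\<forall>k. Suc k < p \<longrightarrow> Max (supp (xs k)) < Min (supp (xs (Suc k)))))
     \<longrightarrow> (let y = (\<lambda>i. \<Sum>k<p. a k * xs k i);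
             z = (\<lambda>i. \<Sum>k<p. a k * unitvec (Max (supp (xs k))) i)
         in tnorm (Fs 0) \<theta> Fs y
            \<le> K * tnorm (Fs 0) \<theta> Fs z
              + 2 * \<epsilon> * tnorm (\<Union>n. Fs n) \<theta> Fs z
              + 2 * tnorm G \<theta> Fs z
              + 2 * \<epsilon> * (\<Sum>k<p. \<bar>a k\<bar>))"
proof -
  have th1: "0 < \<theta> 1" "\<theta> 1 < 1" using th_pos[of 1] by auto
  obtain D where D: "\<theta> 1 ^ D < \<epsilon>" using real_arch_pow_inv[OF eps th1(2)] by blast
  define K where "K = 1 + real D / \<theta> (max 1 m0)"
  show ?thesis
  proof (rule exI[of _ K], intro allI impI, unfold Let_def)
    fix p :: nat and xs :: "nat \<Rightarrow> nat \<Rightarrow> real" and a :: "nat \<Rightarrow> real"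
    assume H: "(\<forall>k<p. finite (supp (xs k)) \<and> supp (xs k) \<noteq> {} \<and> tnorm (Fs 0) \<theta> Fs (xs k) = 1) \<and>
      (\<forall>k. Suc k < p \<longrightarrow> Max (supp (xs k)) < Min (supp (xs (Suc k))))"
    interpret B: blk Fs \<theta> \<epsilon> G m0 p xs a
      by unfold_locales (use reg S0_sub th_pos th_mono eps regG hyp H in auto)
    interpret U: mtH Fs \<theta> "\<Union>n. Fs n"
      by unfold_locales (use th_pos S0_sub in \<open>auto simp: S0_def\<close>)
    have y: "(\<lambda>i. \<Sum>k<p. a k * xs k i) = B.v (\<lambda>_. UNIV) {..<p}" by (simp add: B.v_def restr_def)
    have z: "(\<lambda>i. \<Sum>k<p. a k * unitvec (Max (supp (xs k))) i) = B.zz {..<p}" by (simp add: B.zz_def B.ii_def)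
    have main: "tnorm (Fs 0) \<theta> Fs (B.v (\<lambda>_. UNIV) {..<p}) \<le> (1 + real D / B.ths) * 1 * tnorm (Fs 0) \<theta> Fs (B.zz {..<p})
        + 1 * tnorm G \<theta> Fs (B.zz {..<p}) + \<epsilon> * (\<Sum>k\<in>{..<p}. \<bar>a k\<bar>)"
      by (rule B.final_bd[OF D])
    have Kt: "B.ths = \<theta> (max 1 m0)" by (simp add: B.ths_def)
    have main': "tnorm (Fs 0) \<theta> Fs (B.v (\<lambda>_. UNIV) {..<p}) \<le> K * tnorm (Fs 0) \<theta> Fs (B.zz {..<p})
        + tnorm G \<theta> Fs (B.zz {..<p}) + \<epsilon> * (\<Sum>k<p. \<bar>a k\<bar>)"
      using main Kt by (simp add: K_def)
    have r1: "0 \<le> tnorm (\<Union>n. Fs n) \<theta> Fs (B.zz {..<p})" by (rule U.tn_nonneg[OF B.fin_zz]) simp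
    have r2: "0 \<le> tnorm G \<theta> Fs (B.zz {..<p})" by (rule B.R.tn_nonneg[OF B.fin_zz]) simp
    have s: "0 \<le> (\<Sum>k<p. \<bar>a k\<bar>)" by (simp add: sum_nonneg)
    have f1: "0 \<le> 2 * \<epsilon> * tnorm (\<Union>n. Fs n) \<theta> Fs (B.zz {..<p})" using r1 eps by simp
    have f2: "\<epsilon> * (\<Sum>k<p. \<bar>a k\<bar>) \<le> 2 * \<epsilon> * (\<Sum>k<p. \<bar>a k\<bar>)" using s eps by simp
    have f3: "tnorm G \<theta> Fs (B.zz {..<p}) \<le> 2 * tnorm G \<theta> Fs (B.zz {..<p})" using r2 by simp
    show "tnorm (Fs 0) \<theta> Fs (\<lambda>i. \<Sum>k<p. a k * xs k i)
       \<le> K * tnorm (Fs 0) \<theta> Fs (\<lambda>i. \<Sum>k<p. a k * unitvec (Max (supp (xs k))) i) +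
          2 * \<epsilon> * tnorm (\<Union>n. Fs n) \<theta> Fs (\<lambda>i. \<Sum>k<p. a k * unitvec (Max (supp (xs k))) i) +
          2 * tnorm G \<theta> Fs (\<lambda>i. \<Sum>k<p. a k * unitvec (Max (supp (xs k))) i) +
          2 * \<epsilon> * (\<Sum>k<p. \<bar>a k\<bar>)"
      unfolding y z using main' f1 f2 f3 by linarith
  qed
qed


end
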